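(* Let $D_n$ be the dumbbell graph on $2n$ nodes: the disjoint union of two complete graphs on $n$ nodes each (on $\{1,\dots,n\}$ and $\{n+1,\dots,2n\}$), together with the single additional edge $\{n,2n\}$. For every fixed $\epsilon\in(0,1)$, $t_{\epsilon,1}(D_n)=\Theta_\epsilon(n^3)$, i.e. there are constants $0<c_\epsilon\le C_\epsilon$ depending only on $\epsilon$ with $c_\epsilon n^3\le t_{\epsilon,1}(D_n)\le C_\epsilon n^3$.
   Context: The averaging process on a finite, undirected, connected graph $G=(V,E)$: the state vector $v(t)\in\mathbb R^{V}$, $t=0,1,2,\dots$, starts from a given $v(0)$; at each step $t\ge 1$ an edge $\{i,j\}\in E$ is chosen uniformly at random (independently of all previous choices) and both $v_i$ and $v_j$ are replaced by $(v_i+v_j)/2$, all other coordinates unchanged. $\bar v$ is the constant vector whose entries equal the mean of the entries of $v(0)$. $t_{\epsilon,1}(G)$ is the least $t\in\mathbb N$ such that for every $v(0)$ with $\|v(0)\|_1=1$ one has $\mathbb E\|v(t)-\bar v\|_1\le\epsilon$. *)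

theory Defs
  imports Main "HOL-Analysis.Analysis"
begin

text \<open>Graphs: vertex set V :: nat set, edge set E :: nat set set (each edge a 2-element set).
States are functions nat \<Rightarrow> real; only their values on V matter.\<close>

definition avg_step :: "nat set \<Rightarrow> (nat \<Rightarrow> real) \<Rightarrow> (nat \<Rightarrow> real)" where
  "avg_step e v = (\<lambda>k. if k \<in> e then (\<Sum>j\<in>e. v j) / 2 else v k)"

definition run_avg :: "nat set list \<Rightarrow> (nat \<Rightarrow> real) \<Rightarrow> (nat \<Rightarrow> real)" where
  "run_avg es v = fold avg_step es v"

definition l1norm :: "nat set \<Rightarrow> (nat \<Rightarrow> real) \<Rightarrow> real" where
  "l1norm V v = (\<Sum>k\<in>V. \<bar>v k\<bar>)"

definition mean_vec :: "nat set \<Rightarrow> (nat \<Rightarrow> real) \<Rightarrow> (nat \<Rightarrow> real)" where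
  "mean_vec V v = (\<lambda>k. (\<Sum>j\<in>V. v j) / real (card V))"

text \<open>E || v(t) - vbar ||_1, with the t edges chosen independently and uniformly from E:
an average over all |E|^t equally likely edge sequences.\<close>
definition expected_l1_dist :: "nat set \<Rightarrow> nat set set \<Rightarrow> nat \<Rightarrow> (nat \<Rightarrow> real) \<Rightarrow> real" where
  "expected_l1_dist V E t v0 =
     (\<Sum>es\<in>{es. set es \<subseteq> E \<and> length es = t}.
        l1norm V (\<lambda>k. run_avg es v0 k - mean_vec V v0 k)) / real (card E) ^ t"

definition t_eps_1 :: "real \<Rightarrow> nat set \<Rightarrow> nat set set \<Rightarrow> nat" where
  "t_eps_1 \<epsilon> V E = (LEAST t. \<forall>v0. l1norm V v0 = 1 \<longrightarrow> expected_l1_dist V E t v0 \<le> \<epsilon>)"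

definition dumbbell_V :: "nat \<Rightarrow> nat set" where
  "dumbbell_V n = {1..2*n}"

definition dumbbell_E :: "nat \<Rightarrow> nat set set" where
  "dumbbell_E n =
     {{i, j} | i j. i \<in> {1..n} \<and> j \<in> {1..n} \<and> i \<noteq> j}
   \<union> {{i, j} | i j. i \<in> {n+1..2*n} \<and> j \<in> {n+1..2*n} \<and> i \<noteq> j}
   \<union> {{n, 2*n}}"

end

theory Submission
  imports Defs
begin


lemma avg_step_pair:
  assumes "i \<noteq> j"
  shows "avg_step {i,j} w = (\<lambda>k. if k = i \<or> k = j then (w i + w j)/2 else w k)"
  using assms by (auto simp: avg_step_def fun_eq_iff)

lemma avg_step_out: "k \<notin> e \<Longrightarrow> avg_step e w k = w k"
  by (simp add: avg_step_def)

lemma sum_avg_pair: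
  fixes G :: "nat \<Rightarrow> real \<Rightarrow> real"
  assumes "finite A" "i \<in> A" "j \<in> A" "i \<noteq> j"
  shows "(\<Sum>k\<in>A. G k (avg_step {i,j} w k)) = (\<Sum>k\<in>A. G k (w k)) - G i (w i) - G j (w j)
           + G i ((w i + w j)/2) + G j ((w i + w j)/2)"
proof -
  have A: "A = insert i (insert j (A - {i,j}))" using assms by auto
  have fin: "finite (A - {i,j})" using assms by simp
  have c: "(\<Sum>k\<in>A-{i,j}. G k (avg_step {i,j} w k)) = (\<Sum>k\<in>A-{i,j}. G k (w k))"
    by (rule sum.cong) (auto simp: avg_step_out)
  have "(\<Sum>k\<in>A. G k (avg_step {i,j} w k)) = G i ((w i + w j)/2) + G j ((w i + w j)/2) + (\<Sum>k\<in>A-{i,j}. G k (w k))"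
    apply (subst A) using assms fin c by (simp add: avg_step_pair)
  moreover have "(\<Sum>k\<in>A. G k (w k)) = G i (w i) + G j (w j) + (\<Sum>k\<in>A-{i,j}. G k (w k))"
    apply (subst A) using assms fin by simp
  ultimately show ?thesis by simp
qed

lemma sum_avg_disj:
  assumes "\<forall>k\<in>B. k \<notin> e"
  shows "(\<Sum>k\<in>B. G k (avg_step e w k)) = (\<Sum>k\<in>B. G k (w k))"
  using assms by (intro sum.cong) (auto simp: avg_step_out)

definition cl :: "nat set \<Rightarrow> nat set set" where
  "cl A = {{i, j} | i j. i \<in> A \<and> j \<in> A \<and> i \<noteq> j}"

lemma finite_cl: "finite A \<Longrightarrow> finite (cl A)"
proof -
  assume "finite A"
  have "cl A \<subseteq> (\<lambda>(i,j). {i,j}) ` (A \<times> A)" unfolding cl_def by auto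
  thus ?thesis using \<open>finite A\<close> finite_subset by blast
qed

lemma clique_sum:
  fixes g :: "nat \<Rightarrow> nat \<Rightarrow> real" and h :: "nat set \<Rightarrow> real"
  assumes fin: "finite A" and hg: "\<And>i j. i \<in> A \<Longrightarrow> j \<in> A \<Longrightarrow> i \<noteq> j \<Longrightarrow> h {i,j} = g i j"
    and sym: "\<And>i j. g i j = g j i" and diag: "\<And>i. g i i = 0"
  shows "(\<Sum>e\<in>cl A. h e) = (\<Sum>i\<in>A. \<Sum>j\<in>A. g i j) / 2"
proof -
  define P where "P = {p \<in> A \<times> A. fst p < snd p}"
  have inj: "inj_on (\<lambda>(i,j). {i,j}) P"
    unfolding P_def inj_on_def by (auto simp: doubleton_eq_iff)
  have img: "(\<lambda>(i,j). {i,j}) ` P = cl A"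
  proof
    show "(\<lambda>(i,j). {i,j}) ` P \<subseteq> cl A" unfolding P_def cl_def by fastforce
    show "cl A \<subseteq> (\<lambda>(i,j). {i,j}) ` P"
    proof
      fix e assume "e \<in> cl A"
      then obtain i j where e: "e = {i,j}" "i \<in> A" "j \<in> A" "i \<noteq> j" unfolding cl_def by auto
      show "e \<in> (\<lambda>(i,j). {i,j}) ` P"
      proof (cases "i < j")
        case True
        then show ?thesis using e unfolding P_def by (auto intro!: image_eqI[of _ _ "(i,j)"])
      next
        case False
        then have "j < i" using e by simp
        then show ?thesis using e unfolding P_def by (auto intro!: image_eqI[of _ _ "(j,i)"])
      qed
    qed
  qed
  have s1: "(\<Sum>e\<in>cl A. h e) = (\<Sum>p\<in>P. g (fst p) (snd p))"
  proof -
    have "(\<Sum>e\<in>cl A. h e) = (\<Sum>p\<in>P. h ((\<lambda>(i,j). {i,j}) p))"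
      using sum.reindex[OF inj, of h] img by simp
    also have "\<dots> = (\<Sum>p\<in>P. g (fst p) (snd p))"
      by (rule sum.cong) (auto simp: P_def hg)
    finally show ?thesis .
  qed
  have s2: "(\<Sum>p\<in>P. g (fst p) (snd p)) = (\<Sum>i\<in>A. \<Sum>j\<in>A. if i < j then g i j else 0)"
  proof -
    have "(\<Sum>i\<in>A. \<Sum>j\<in>A. if i < j then g i j else 0) = (\<Sum>p\<in>A\<times>A. if fst p < snd p then g (fst p) (snd p) else 0)"
      by (simp add: sum.cartesian_product case_prod_beta)
    also have "\<dots> = (\<Sum>p\<in>P. g (fst p) (snd p))"
      unfolding P_def using fin by (simp add: sum.inter_filter)
    finally show ?thesis by simp
  qed
  have s3: "(\<Sum>i\<in>A. \<Sum>j\<in>A. g i j) = (\<Sum>i\<in>A. \<Sum>j\<in>A. if i < j then g i j else 0) + (\<Sum>i\<in>A. \<Sum>j\<in>A. if j < i then g i j else 0)"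
  proof -
    have "\<And>i j. g i j = (if i < j then g i j else 0) + (if j < i then g i j else 0)"
      using diag by (metis add.right_neutral add_0 linorder_neqE_nat less_asym)
    hence "(\<Sum>i\<in>A. \<Sum>j\<in>A. g i j) = (\<Sum>i\<in>A. \<Sum>j\<in>A. (if i < j then g i j else 0) + (if j < i then g i j else 0))"
      by presburger
    also have "\<dots> = (\<Sum>i\<in>A. \<Sum>j\<in>A. if i < j then g i j else 0) + (\<Sum>i\<in>A. \<Sum>j\<in>A. if j < i then g i j else 0)"
      by (simp add: sum.distrib)
    finally show ?thesis .
  qed
  have s4: "(\<Sum>i\<in>A. \<Sum>j\<in>A. if j < i then g i j else 0) = (\<Sum>i\<in>A. \<Sum>j\<in>A. if i < j then g i j else 0)"
  proof -
    have "(\<Sum>i\<in>A. \<Sum>j\<in>A. if j < i then g i j else 0) = (\<Sum>j\<in>A. \<Sum>i\<in>A. if j < i then g i j else 0)"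
      by (rule sum.swap)
    also have "\<dots> = (\<Sum>j\<in>A. \<Sum>i\<in>A. if j < i then g j i else 0)"
      by (intro sum.cong refl) (metis sym)
    finally show ?thesis .
  qed
  show ?thesis using s1 s2 s3 s4 by simp
qed

lemma card_cl:
  assumes "finite A"
  shows "real (card (cl A)) = (real (card A) * real (card A) - real (card A)) / 2"
proof -
  have "real (card (cl A)) = (\<Sum>e\<in>cl A. 1)" by simp
  also have "\<dots> = (\<Sum>i\<in>A. \<Sum>j\<in>A. if i = j then 0 else 1) / 2"
    by (rule clique_sum) (use assms in auto)
  also have "(\<Sum>i\<in>A. \<Sum>j\<in>A. if i = j then 0 else (1::real)) = (\<Sum>i\<in>A. real (card A) - 1)"
  proof (rule sum.cong)
    fix i assume "i \<in> A"
    have "(\<Sum>j\<in>A. if i = j then 0 else (1::real)) = (\<Sum>j\<in>A. 1) - (\<Sum>j\<in>A. if i = j then 1 else 0)"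
    proof -
      have "(\<lambda>j. if i = j then 0 else (1::real)) = (\<lambda>j. 1 - (if i = j then 1 else 0))" (is "_ = ?r") by auto
      have "(\<Sum>j\<in>A. if i = j then 0 else (1::real)) = sum ?r A" by (rule sum.cong) auto
      also have "\<dots> = (\<Sum>j\<in>A. 1) - (\<Sum>j\<in>A. if i = j then 1 else 0)" by (rule sum_subtractf)
      finally show ?thesis .
    qed
    also have "\<dots> = real (card A) - 1" using \<open>i \<in> A\<close> assms by simp
    finally show "(\<Sum>j\<in>A. if i = j then 0 else (1::real)) = real (card A) - 1" .
  qed simp
  finally show ?thesis by (simp add: algebra_simps)
qed



lemma bridge_F_identity:
  fixes n QL QR mL mR a c :: real
  assumes "n > 0"
  defines "m \<equiv> (a + c) / 2"
  shows "(QL - a^2 + m^2) - (n*mL - a + m)^2/n + ((QR - c^2 + m^2) - (n*mR - c + m)^2/n)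
       = (QL - n*mL^2) + (QR - n*mR^2) + (mL - mR)^2/2 - ((a - mL) - (c - mR))^2/2 - (a - c)^2/(2*n)"
  using assms unfolding m_def by (simp add: field_simps power2_eq_square; simp add: algebra_simps)

lemma lam_small:
  fixes n F D y :: real
  assumes n: "n \<ge> 1" and F: "F \<ge> 0" and y: "y^2 \<le> 2*F"
  shows "2*n*(F + D^2/2 - y^2/2 - (D+y)^2/(2*n)) + n^2*(D - (D+y)/n)^2 - (2*n*F + n^2*D^2) - n^2*F
         \<le> - (2*n*F + n^2*D^2)/(6*n)"
proof -
  have e: "2*n*(F + D^2/2 - y^2/2 - (D+y)^2/(2*n)) + n^2*(D - (D+y)/n)^2 - (2*n*F + n^2*D^2) - n^2*F
        = - n*(D+y)^2 - n^2*F"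
    using n by (simp add: field_simps power2_eq_square; simp add: algebra_simps)
  have r: "- (2*n*F + n^2*D^2)/(6*n) = -F/3 - n*D^2/6"
    using n by (simp add: field_simps power2_eq_square)
  have x: "(D+y)^2 \<ge> D^2/2 - y^2"
  proof -
    have "0 \<le> (D + 2*y)^2" by simp
    thus ?thesis by (simp add: power2_eq_square algebra_simps)
  qed
  have "n*(D+y)^2 \<ge> n*(D^2/2 - y^2)/3"
  proof -
    have "n*(D+y)^2 \<ge> n*(D+y)^2/3" using n by simp
    moreover have "n*(D+y)^2 \<ge> n*(D^2/2 - y^2)" using x n by (simp add: mult_left_mono)
    moreover have "n*(D+y)^2 \<ge> 0" using n by simp
    moreover have "\<And>P X::real. P \<le> X \<Longrightarrow> 0 \<le> X \<Longrightarrow> P/3 \<le> X" by linarith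
    ultimately show ?thesis by blast
  qed
  moreover have "n*y^2 \<le> n*(2*F)" using y n by (simp add: mult_left_mono)
  moreover have "(n^2 - 2*n/3 - 1/3) * F \<ge> 0"
  proof -
    have "n^2 - 2*n/3 - 1/3 = (n - 1)*(n + 1/3)" by (simp add: power2_eq_square field_simps)
    also have "\<dots> \<ge> 0" using n by simp
    finally show ?thesis using F by simp
  qed
  ultimately show ?thesis unfolding e r by (simp add: algebra_simps)
qed

lemma lam_big:
  fixes n F D y :: real
  assumes n: "n \<ge> 6" and F: "F \<ge> 0" and y: "y^2 \<le> 2*F"
  shows "10*(F + D^2/2 - y^2/2 - (D+y)^2/(2*n)) + n^2*(D - (D+y)/n)^2 - (10*F + n^2*D^2) - 5*n*F
         \<le> - (10*F + n^2*D^2)/(6*n)"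
proof -
  have n0: "n > 0" using n by simp
  have nn: "n*n \<ge> 6*n" using n by (simp add: mult_right_mono)
  have e: "10*(F + D^2/2 - y^2/2 - (D+y)^2/(2*n)) + n^2*(D - (D+y)/n)^2 - (10*F + n^2*D^2) - 5*n*F
        = 5*D^2 - 5*y^2 + (1 - 5/n)*(D+y)^2 - 2*n*D^2 - 2*n*D*y - 5*n*F"
    using n0 by (simp add: field_simps power2_eq_square; simp add: algebra_simps)
  have r: "- (10*F + n^2*D^2)/(6*n) = -5*F/(3*n) - n*D^2/6"
    using n0 by (simp add: field_simps power2_eq_square)
  have h1: "-2*n*D*y \<le> (n/2)*D^2 + 2*n*y^2"
  proof -
    have "0 \<le> (n/2)*(D + 2*y)^2" using n0 by simp
    thus ?thesis by (simp add: power2_eq_square algebra_simps)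
  qed
  have h2: "(1 - 5/n)*(D+y)^2 \<le> (1 - 5/n)*(2*D^2 + 2*y^2)"
  proof (rule mult_left_mono)
    have "0 \<le> (D - y)^2" by simp
    thus "(D+y)^2 \<le> 2*D^2 + 2*y^2" by (simp add: power2_eq_square algebra_simps)
    show "0 \<le> 1 - 5/n" using n by (simp add: field_simps)
  qed
  have c1: "2*n - 3 - 10/n \<ge> 0" using n nn n0 by (simp add: field_simps; linarith)
  have h3: "(2*n - 3 - 10/n)*y^2 \<le> (2*n - 3 - 10/n)*(2*F)" by (rule mult_left_mono[OF y c1])
  have c2: "7 - 10/n - 3/2*n \<le> - n/6" using n nn n0 by (simp add: field_simps; linarith)
  have h4: "(7 - 10/n - 3/2*n)*D^2 \<le> (- n/6)*D^2" using mult_right_mono[OF c2, of "D^2"] by simp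
  have c3: "- n - 6 - 20/n \<le> -5/(3*n)"
  proof -
    have "5/(3*n) \<le> 20/n" using n0 by (simp add: divide_simps)
    thus ?thesis using n by linarith
  qed
  have h5: "(- n - 6 - 20/n)*F \<le> (-5/(3*n))*F" using mult_right_mono[OF c3 F] by simp
  have "5*D^2 - 5*y^2 + (1 - 5/n)*(D+y)^2 - 2*n*D^2 - 2*n*D*y - 5*n*F
     \<le> (7 - 10/n - 3/2*n)*D^2 + (2*n - 3 - 10/n)*y^2 - 5*n*F"
    using h1 h2 by (simp add: algebra_simps)
  also have "\<dots> \<le> (- n/6)*D^2 + (2*n - 3 - 10/n)*(2*F) - 5*n*F" using h3 h4 by linarith
  also have "\<dots> = (- n/6)*D^2 + (- n - 6 - 20/n)*F" by (simp add: algebra_simps)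
  also have "\<dots> \<le> (- n/6)*D^2 + (-5/(3*n))*F" using h5 by linarith
  finally show ?thesis unfolding e r by (simp add: algebra_simps)
qed



definition SA :: "nat set \<Rightarrow> (nat \<Rightarrow> real) \<Rightarrow> real" where "SA A w = (\<Sum>k\<in>A. w k)"
definition QA :: "nat set \<Rightarrow> (nat \<Rightarrow> real) \<Rightarrow> real" where "QA A w = (\<Sum>k\<in>A. (w k)^2)"

lemma bilin_double_sum:
  fixes u w :: "nat \<Rightarrow> real"
  assumes "finite A"
  shows "(\<Sum>i\<in>A. \<Sum>j\<in>A. (u i - u j) * (w i - w j))
       = 2 * real (card A) * (\<Sum>i\<in>A. u i * w i) - 2 * (\<Sum>i\<in>A. u i) * (\<Sum>i\<in>A. w i)"
proof -
  have e: "\<And>i j. (u i - u j) * (w i - w j) = u i * w i + u j * w j - u i * w j - u j * w i"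
    by (simp add: algebra_simps)
  have a1: "(\<Sum>i\<in>A. \<Sum>j\<in>A. u i * w i) = real (card A) * (\<Sum>i\<in>A. u i * w i)"
    by (simp add: sum_distrib_left mult.commute)
  have a2: "(\<Sum>i\<in>A. \<Sum>j\<in>A. u j * w j) = real (card A) * (\<Sum>i\<in>A. u i * w i)"
    by simp
  have a3: "(\<Sum>i\<in>A. \<Sum>j\<in>A. u i * w j) = (\<Sum>i\<in>A. u i) * (\<Sum>i\<in>A. w i)"
    by (simp add: sum_product)
  have a4: "(\<Sum>i\<in>A. \<Sum>j\<in>A. u j * w i) = (\<Sum>i\<in>A. u i) * (\<Sum>i\<in>A. w i)"
  proof -
    have "(\<Sum>i\<in>A. \<Sum>j\<in>A. u j * w i) = (\<Sum>j\<in>A. \<Sum>i\<in>A. u j * w i)" by (rule sum.swap)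
    thus ?thesis using a3 by simp
  qed
  have "(\<Sum>i\<in>A. \<Sum>j\<in>A. (u i - u j) * (w i - w j))
      = (\<Sum>i\<in>A. \<Sum>j\<in>A. u i * w i) + (\<Sum>i\<in>A. \<Sum>j\<in>A. u j * w j) - (\<Sum>i\<in>A. \<Sum>j\<in>A. u i * w j) - (\<Sum>i\<in>A. \<Sum>j\<in>A. u j * w i)"
    unfolding e by (simp add: sum.distrib sum_subtractf)
  thus ?thesis using a1 a2 a3 a4 by simp
qed

lemma var_eq:
  assumes "finite A" "card A > 0"
  shows "(\<Sum>k\<in>A. (w k - SA A w / card A)^2) = QA A w - (SA A w)^2 / card A"
proof -
  define m where "m = SA A w / card A"
  have "(\<Sum>k\<in>A. (w k - m)^2) = (\<Sum>k\<in>A. (w k)^2 - 2*m*w k + m^2)"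
    by (rule sum.cong) (simp_all add: power2_eq_square algebra_simps)
  also have "\<dots> = (\<Sum>k\<in>A. (w k)^2) - 2 * m * (\<Sum>k\<in>A. w k) + card A * m^2"
    by (simp add: sum.distrib sum_subtractf sum_distrib_left)
  also have "\<dots> = QA A w - (SA A w)^2 / card A"
    using assms unfolding m_def QA_def SA_def by (simp add: field_simps power2_eq_square)
  finally show ?thesis unfolding m_def .
qed

lemma var_nonneg:
  assumes "finite A" "card A > 0"
  shows "QA A w - (SA A w)^2 / card A \<ge> 0"
  using var_eq[OF assms, of w] by (metis sum_nonneg zero_le_power2)

lemma var_single:
  assumes "finite A" "card A > 0" "p \<in> A"
  shows "(w p - SA A w / card A)^2 \<le> QA A w - (SA A w)^2 / card A"
proof -
  have "(w p - SA A w / card A)^2 \<le> (\<Sum>k\<in>A. (w k - SA A w / card A)^2)"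
    by (rule member_le_sum) (use assms in auto)
  thus ?thesis using var_eq[OF assms(1,2)] by simp
qed

lemma sum_avg_one:
  fixes G :: "nat \<Rightarrow> real \<Rightarrow> real"
  assumes "finite A" "i \<in> A" "j \<notin> A"
  shows "(\<Sum>k\<in>A. G k (avg_step {i,j} w k)) = (\<Sum>k\<in>A. G k (w k)) - G i (w i) + G i ((w i + w j)/2)"
proof -
  have ij: "i \<noteq> j" using assms by auto
  have A: "A = insert i (A - {i})" using assms by auto
  have c: "(\<Sum>k\<in>A-{i}. G k (avg_step {i,j} w k)) = (\<Sum>k\<in>A-{i}. G k (w k))"
  proof (rule sum.cong)
    fix x assume "x \<in> A - {i}"
    hence "x \<notin> {i,j}" using assms by auto
    thus "G x (avg_step {i,j} w x) = G x (w x)" by (simp add: avg_step_def)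
  qed simp
  have "(\<Sum>k\<in>A. G k (avg_step {i,j} w k)) = G i (avg_step {i,j} w i) + (\<Sum>k\<in>A-{i}. G k (avg_step {i,j} w k))"
    using assms(1,2) by (rule sum.remove)
  also have "\<dots> = G i ((w i + w j)/2) + (\<Sum>k\<in>A-{i}. G k (w k))"
    using c ij by (simp add: avg_step_pair)
  finally have "(\<Sum>k\<in>A. G k (avg_step {i,j} w k)) = G i ((w i + w j)/2) + (\<Sum>k\<in>A-{i}. G k (w k))" .
  moreover have "(\<Sum>k\<in>A. G k (w k)) = G i (w i) + (\<Sum>k\<in>A-{i}. G k (w k))"
    using assms(1,2) by (rule sum.remove)
  ultimately show ?thesis by simp
qed

locale db =
  fixes n :: nat
  assumes n1: "1 \<le> n"
begin

abbreviation "L \<equiv> {1..n}"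
abbreviation "R \<equiv> {n+1..2*n}"
abbreviation "V \<equiv> {1..2*n}"
abbreviation "E \<equiv> dumbbell_E n"

lemma cardL: "card L = n" by simp
lemma cardR: "card R = n" by simp

definition FF :: "(nat \<Rightarrow> real) \<Rightarrow> real" where
  "FF w = (QA L w - (SA L w)^2 / n) + (QA R w - (SA R w)^2 / n)"
definition DD :: "(nat \<Rightarrow> real) \<Rightarrow> real" where
  "DD w = (SA L w - SA R w) / n"
definition bb :: real where "bb = (if n \<le> 5 then 2 * real n else 10)"
definition Lam :: "(nat \<Rightarrow> real) \<Rightarrow> real" where
  "Lam w = bb * FF w + (real n)^2 * (DD w)^2"

lemma FF_nonneg: "FF w \<ge> 0"
  using var_nonneg[of L w] var_nonneg[of R w] n1 unfolding FF_def by simp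

lemma E_eq: "E = cl L \<union> cl R \<union> {{n, 2*n}}"
  unfolding dumbbell_E_def cl_def by simp

lemma finE: "finite E" unfolding E_eq by (simp add: finite_cl)

lemma sumE: "(\<Sum>e\<in>E. h e) = (\<Sum>e\<in>cl L. h e) + (\<Sum>e\<in>cl R. h e) + h {n, 2*n}"
proof -
  have d1: "cl L \<inter> cl R = {}"
  proof (rule ccontr)
    assume "cl L \<inter> cl R \<noteq> {}"
    then obtain e where "e \<in> cl L" "e \<in> cl R" by auto
    then obtain i j i' j' where "e = {i,j}" "i \<in> L" "e = {i',j'}" "i' \<in> R" "j' \<in> R"
      unfolding cl_def by blast
    thus False by (auto simp: doubleton_eq_iff)
  qed
  have d2: "{n, 2*n} \<notin> cl L"
  proof
    assume "{n, 2*n} \<in> cl L"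
    then obtain i j where "{n,2*n} = {i,j}" "i \<in> L" "j \<in> L" unfolding cl_def by blast
    thus False using n1 by (auto simp: doubleton_eq_iff)
  qed
  have d3: "{n, 2*n} \<notin> cl R"
  proof
    assume "{n, 2*n} \<in> cl R"
    then obtain i j where "{n,2*n} = {i,j}" "i \<in> R" "j \<in> R" unfolding cl_def by blast
    thus False using n1 by (auto simp: doubleton_eq_iff)
  qed
  have "(\<Sum>e\<in>E. h e) = (\<Sum>e\<in>cl L \<union> cl R. h e) + h {n, 2*n}"
    unfolding E_eq using d2 d3 by (subst sum.union_disjoint) (auto simp: finite_cl)
  also have "(\<Sum>e\<in>cl L \<union> cl R. h e) = (\<Sum>e\<in>cl L. h e) + (\<Sum>e\<in>cl R. h e)"
    using d1 by (subst sum.union_disjoint) (auto simp: finite_cl)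
  finally show ?thesis .
qed

lemma cardE: "real (card E) = real n * real n - real n + 1"
proof -
  have "real (card E) = (\<Sum>e\<in>E. (1::real))" by simp
  also have "\<dots> = real (card (cl L)) + real (card (cl R)) + 1" unfolding sumE by simp
  also have "\<dots> = real n * real n - real n + 1" using card_cl[of L] card_cl[of R] by simp
  finally show ?thesis .
qed

lemma cardE_pos: "card E > 0"
proof -
  have "real n * real n \<ge> real n" using n1 by (simp add: mult_right_mono)
  thus ?thesis using cardE by linarith
qed

lemma cardE_le: "real (card E) \<le> real n ^ 2"
  using cardE n1 by (simp add: power2_eq_square)

lemma cardE_ge: "real (card E) \<ge> real n"
proof -
  have "real n * real n \<ge> real n * 1" using n1 by (intro mult_left_mono) auto
  hence "real n * real n - real n + 1 \<ge> 1" by simp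
  moreover have "real n * real n - real n + 1 - real n = (real n - 1)^2" by (simp add: power2_eq_square algebra_simps)
  ultimately show ?thesis using cardE by (metis diff_ge_0_iff_ge zero_le_power2)
qed

lemma E_pair: "e \<in> E \<Longrightarrow> \<exists>i j. e = {i,j} \<and> i \<noteq> j \<and> i \<in> V \<and> j \<in> V"
proof -
  assume "e \<in> E"
  then consider "e \<in> cl L" | "e \<in> cl R" | "e = {n, 2*n}" unfolding E_eq by blast
  thus ?thesis
  proof cases
    case 1 then obtain i j where "e = {i,j}" "i \<in> L" "j \<in> L" "i \<noteq> j" unfolding cl_def by blast
    thus ?thesis by (intro exI[of _ i] exI[of _ j]) auto
  next
    case 2 then obtain i j where "e = {i,j}" "i \<in> R" "j \<in> R" "i \<noteq> j" unfolding cl_def by blast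
    thus ?thesis by (intro exI[of _ i] exI[of _ j]) auto
  next
    case 3 thus ?thesis using n1 by (intro exI[of _ n] exI[of _ "2*n"]) auto
  qed
qed

lemma clL_effect:
  assumes "i \<in> L" "j \<in> L" "i \<noteq> j"
  shows "FF (avg_step {i,j} w) = FF w - (w i - w j)^2/2" "DD (avg_step {i,j} w) = DD w"
proof -
  have s: "SA L (avg_step {i,j} w) = SA L w"
    using sum_avg_pair[of L i j "\<lambda>k x. x" w] assms unfolding SA_def by simp
  have q: "QA L (avg_step {i,j} w) = QA L w - (w i - w j)^2/2"
    using sum_avg_pair[of L i j "\<lambda>k x. x^2" w] assms unfolding QA_def
    by (simp add: power2_eq_square field_simps)
  have r1: "SA R (avg_step {i,j} w) = SA R w"
    unfolding SA_def using sum_avg_disj[of R "{i,j}" "\<lambda>k x. x" w] assms by auto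
  have r2: "QA R (avg_step {i,j} w) = QA R w"
    unfolding QA_def using sum_avg_disj[of R "{i,j}" "\<lambda>k x. x^2" w] assms by auto
  show "FF (avg_step {i,j} w) = FF w - (w i - w j)^2/2" unfolding FF_def s q r1 r2 by simp
  show "DD (avg_step {i,j} w) = DD w" unfolding DD_def s r1 by simp
qed

lemma clR_effect:
  assumes "i \<in> R" "j \<in> R" "i \<noteq> j"
  shows "FF (avg_step {i,j} w) = FF w - (w i - w j)^2/2" "DD (avg_step {i,j} w) = DD w"
proof -
  have s: "SA R (avg_step {i,j} w) = SA R w"
    using sum_avg_pair[of R i j "\<lambda>k x. x" w] assms unfolding SA_def by simp
  have q: "QA R (avg_step {i,j} w) = QA R w - (w i - w j)^2/2"
    using sum_avg_pair[of R i j "\<lambda>k x. x^2" w] assms unfolding QA_def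
    by (simp add: power2_eq_square field_simps)
  have r1: "SA L (avg_step {i,j} w) = SA L w"
    unfolding SA_def using sum_avg_disj[of L "{i,j}" "\<lambda>k x. x" w] assms by auto
  have r2: "QA L (avg_step {i,j} w) = QA L w"
    unfolding QA_def using sum_avg_disj[of L "{i,j}" "\<lambda>k x. x^2" w] assms by auto
  show "FF (avg_step {i,j} w) = FF w - (w i - w j)^2/2" unfolding FF_def s q r1 r2 by simp
  show "DD (avg_step {i,j} w) = DD w" unfolding DD_def s r1 by simp
qed

lemma clL_sumF: "(\<Sum>e\<in>cl L. FF (avg_step e w) - FF w) = - (real n / 2) * (QA L w - (SA L w)^2 / n)"
proof -
  have "(\<Sum>e\<in>cl L. FF (avg_step e w) - FF w) = (\<Sum>i\<in>L. \<Sum>j\<in>L. - ((w i - w j)^2)/2) / 2"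
    by (rule clique_sum) (auto simp: clL_effect power2_commute)
  also have "\<dots> = - (\<Sum>i\<in>L. \<Sum>j\<in>L. (w i - w j) * (w i - w j)) / 4"
    by (simp add: sum_negf sum_divide_distrib[symmetric] power2_eq_square)
  also have "\<dots> = - (2 * real n * QA L w - 2 * (SA L w)^2) / 4"
    by (subst bilin_double_sum) (simp_all add: QA_def SA_def power2_eq_square)
  also have "\<dots> = - (real n / 2) * (QA L w - (SA L w)^2 / n)"
    using n1 by (simp add: field_simps)
  finally show ?thesis .
qed

lemma clR_sumF: "(\<Sum>e\<in>cl R. FF (avg_step e w) - FF w) = - (real n / 2) * (QA R w - (SA R w)^2 / n)"
proof -
  have "(\<Sum>e\<in>cl R. FF (avg_step e w) - FF w) = (\<Sum>i\<in>R. \<Sum>j\<in>R. - ((w i - w j)^2)/2) / 2"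
    by (rule clique_sum) (auto simp: clR_effect power2_commute)
  also have "\<dots> = - (\<Sum>i\<in>R. \<Sum>j\<in>R. (w i - w j) * (w i - w j)) / 4"
    by (simp add: sum_negf sum_divide_distrib[symmetric] power2_eq_square)
  also have "\<dots> = - (2 * real n * QA R w - 2 * (SA R w)^2) / 4"
    by (subst bilin_double_sum) (simp_all add: QA_def SA_def power2_eq_square)
  also have "\<dots> = - (real n / 2) * (QA R w - (SA R w)^2 / n)"
    using n1 by (simp add: field_simps)
  finally show ?thesis .
qed

lemma clL_sumD: "(\<Sum>e\<in>cl L. (DD (avg_step e w))^2 - (DD w)^2) = 0"
proof -
  have "(\<Sum>e\<in>cl L. (DD (avg_step e w))^2 - (DD w)^2) = (\<Sum>i\<in>L. \<Sum>j\<in>L. (0::real)) / 2"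
    by (rule clique_sum) (auto simp: clL_effect)
  thus ?thesis by simp
qed

lemma clR_sumD: "(\<Sum>e\<in>cl R. (DD (avg_step e w))^2 - (DD w)^2) = 0"
proof -
  have "(\<Sum>e\<in>cl R. (DD (avg_step e w))^2 - (DD w)^2) = (\<Sum>i\<in>R. \<Sum>j\<in>R. (0::real)) / 2"
    by (rule clique_sum) (auto simp: clR_effect)
  thus ?thesis by simp
qed

end


lemma bridge_identity:
  fixes n SL QL SR QR a c :: real
  assumes "n > 0"
  shows "(QL - a^2 + ((a+c)/2)^2) - (SL - a + (a+c)/2)^2/n + ((QR - c^2 + ((c+a)/2)^2) - (SR - c + (c+a)/2)^2/n)
       = (QL - SL^2/n) + (QR - SR^2/n) + ((SL - SR)/n)^2/2 - ((a - SL/n) - (c - SR/n))^2/2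
         - ((SL - SR)/n + ((a - SL/n) - (c - SR/n)))^2/(2*n)"
  using assms by (simp add: field_simps power2_eq_square; simp add: algebra_simps)

lemma aux3: "(y2::real) \<le> 2*a + 2*b \<Longrightarrow> a \<le> A \<Longrightarrow> b \<le> B \<Longrightarrow> y2 \<le> 2*(A+B)"
  by smt

context db begin

lemma n_in_L: "n \<in> L" using n1 by simp
lemma n2_notin_L: "2*n \<notin> L" using n1 by simp
lemma n2_in_R: "2*n \<in> R" using n1 by simp
lemma n_notin_R: "n \<notin> R" by simp

lemma bridge_effect:
  fixes w :: "nat \<Rightarrow> real"
  defines "a \<equiv> w n" and "c \<equiv> w (2*n)" and "D \<equiv> DD w"
    and "y \<equiv> (w n - SA L w / n) - (w (2*n) - SA R w / n)"
  shows "FF (avg_step {n,2*n} w) = FF w + D^2/2 - y^2/2 - (D+y)^2/(2*n)"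
    and "DD (avg_step {n,2*n} w) = D - (D+y)/n"
    and "y^2 \<le> 2 * FF w"
proof -
  have sw: "{n, 2*n} = {2*n, n}" by auto
  have s1: "SA L (avg_step {n,2*n} w) = SA L w - a + (a+c)/2"
    using sum_avg_one[of L n "2*n" "\<lambda>k x. x" w] n_in_L n2_notin_L unfolding SA_def a_def c_def by simp
  have q1: "QA L (avg_step {n,2*n} w) = QA L w - a^2 + ((a+c)/2)^2"
    using sum_avg_one[of L n "2*n" "\<lambda>k x. x^2" w] n_in_L n2_notin_L unfolding QA_def a_def c_def by simp
  have s2: "SA R (avg_step {n,2*n} w) = SA R w - c + (c+a)/2"
    using sum_avg_one[of R "2*n" n "\<lambda>k x. x" w] n2_in_R n_notin_R unfolding SA_def a_def c_def sw by simp
  have q2: "QA R (avg_step {n,2*n} w) = QA R w - c^2 + ((c+a)/2)^2"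
    using sum_avg_one[of R "2*n" n "\<lambda>k x. x^2" w] n2_in_R n_notin_R unfolding QA_def a_def c_def sw by simp
  have np: "real n > 0" using n1 by simp
  show "FF (avg_step {n,2*n} w) = FF w + D^2/2 - y^2/2 - (D+y)^2/(2*n)"
    unfolding FF_def s1 q1 s2 q2 D_def DD_def y_def a_def c_def
    using bridge_identity[OF np, of "QA L w" "w n" "w (2*n)" "SA L w" "QA R w" "SA R w"] by simp
  show "DD (avg_step {n,2*n} w) = D - (D+y)/n"
    unfolding DD_def s1 s2 D_def y_def a_def c_def using np by (simp add: field_simps)
  have p: "(w n - SA L w / n)^2 \<le> QA L w - (SA L w)^2 / n"
    using var_single[of L n w] n_in_L n1 by simp
  have q: "(w (2*n) - SA R w / n)^2 \<le> QA R w - (SA R w)^2 / n"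
    using var_single[of R "2*n" w] n2_in_R n1 by simp
  have pq: "\<And>p q::real. (p - q)^2 \<le> 2*p^2 + 2*q^2"
  proof -
    fix p q :: real
    have "0 \<le> (p + q)^2" by simp
    thus "(p - q)^2 \<le> 2*p^2 + 2*q^2" by (simp add: power2_eq_square algebra_simps)
  qed
  have "y^2 \<le> 2 * (w n - SA L w / n)^2 + 2 * (w (2*n) - SA R w / n)^2"
    unfolding y_def by (rule pq)
  from aux3[OF this p q] show "y^2 \<le> 2 * FF w" unfolding FF_def .
qed

lemma sum_minus_const: "(\<Sum>e\<in>E. f e) = (\<Sum>e\<in>E. f e - c) + real (card E) * c"
  by (simp add: sum_subtractf)

lemma stepF: "(\<Sum>e\<in>E. FF (avg_step e w)) \<le> (real (card E) - real n / 2) * FF w + (DD w)^2 / 2"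
proof -
  define D where "D = DD w"
  define y where "y = (w n - SA L w / n) - (w (2*n) - SA R w / n)"
  note be = bridge_effect[of w, folded D_def y_def]
  have "(\<Sum>e\<in>E. FF (avg_step e w) - FF w)
      = - (real n / 2) * (QA L w - (SA L w)^2 / n) - (real n / 2) * (QA R w - (SA R w)^2 / n)
        + (D^2/2 - y^2/2 - (D+y)^2/(2*n))"
    unfolding sumE clL_sumF clR_sumF be(1) by simp
  also have "\<dots> = - (real n / 2) * FF w + (D^2/2 - y^2/2 - (D+y)^2/(2*n))"
    unfolding FF_def by (simp add: algebra_simps)
  also have "\<dots> \<le> - (real n / 2) * FF w + D^2/2"
  proof -
    have "0 \<le> (D+y)^2/(2*n)" by simp
    moreover have "0 \<le> y^2" by simp
    ultimately show ?thesis by linarith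
  qed
  finally have "(\<Sum>e\<in>E. FF (avg_step e w) - FF w) \<le> - (real n / 2) * FF w + D^2/2" .
  thus ?thesis unfolding D_def using sum_minus_const[of "\<lambda>e. FF (avg_step e w)" "FF w"]
    by (simp add: algebra_simps)
qed

lemma stepLam: "(\<Sum>e\<in>E. Lam (avg_step e w)) \<le> (real (card E) - 1 / (6 * real n)) * Lam w"
proof -
  define D where "D = DD w"
  define y where "y = (w n - SA L w / n) - (w (2*n) - SA R w / n)"
  define F where "F = FF w"
  note be = bridge_effect[of w, folded D_def y_def F_def]
  have sF0: "(\<Sum>e\<in>E. FF (avg_step e w) - FF w)
      = - (real n / 2) * (QA L w - (SA L w)^2 / n) - (real n / 2) * (QA R w - (SA R w)^2 / n)
        + (D^2/2 - y^2/2 - (D+y)^2/(2*n))"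
    unfolding sumE clL_sumF clR_sumF be(1) by (simp add: F_def)
  have sF: "(\<Sum>e\<in>E. FF (avg_step e w) - FF w) = - (real n / 2) * F + (D^2/2 - y^2/2 - (D+y)^2/(2*n))"
    unfolding sF0 F_def by (simp add: FF_def algebra_simps)
  have sD: "(\<Sum>e\<in>E. (DD (avg_step e w))^2 - (DD w)^2) = (D - (D+y)/n)^2 - D^2"
    unfolding sumE clL_sumD clR_sumD be(2) D_def by simp
  have "(\<Sum>e\<in>E. Lam (avg_step e w) - Lam w)
      = (\<Sum>e\<in>E. bb * (FF (avg_step e w) - FF w) + (real n)^2 * ((DD (avg_step e w))^2 - (DD w)^2))"
    unfolding Lam_def by (intro sum.cong refl) (simp add: algebra_simps)
  also have "\<dots> = bb * (\<Sum>e\<in>E. FF (avg_step e w) - FF w) + (real n)^2 * (\<Sum>e\<in>E. (DD (avg_step e w))^2 - (DD w)^2)"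
    by (simp add: sum.distrib sum_distrib_left)
  also have "\<dots> = bb * (- (real n / 2) * F + (D^2/2 - y^2/2 - (D+y)^2/(2*n))) + (real n)^2 * ((D - (D+y)/n)^2 - D^2)"
    unfolding sF sD ..
  also have "\<dots> \<le> - Lam w / (6 * real n)"
  proof (cases "n \<le> 5")
    case True
    have "2 * real n * (F + D^2/2 - y^2/2 - (D+y)^2/(2*real n)) + (real n)^2 * (D - (D+y)/real n)^2
          - (2 * real n * F + (real n)^2 * D^2) - (real n)^2 * F
         \<le> - (2 * real n * F + (real n)^2 * D^2) / (6 * real n)"
      by (rule lam_small) (use n1 FF_nonneg be(3) F_def in auto)
    thus ?thesis using True unfolding Lam_def bb_def F_def D_def
      by (simp add: algebra_simps power2_eq_square)
  next
    case False
    have "10 * (F + D^2/2 - y^2/2 - (D+y)^2/(2*real n)) + (real n)^2 * (D - (D+y)/real n)^2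
          - (10 * F + (real n)^2 * D^2) - 5 * real n * F
         \<le> - (10 * F + (real n)^2 * D^2) / (6 * real n)"
      by (rule lam_big) (use False FF_nonneg be(3) F_def in auto)
    thus ?thesis using False unfolding Lam_def bb_def F_def D_def
      by (simp add: algebra_simps power2_eq_square)
  qed
  finally have "(\<Sum>e\<in>E. Lam (avg_step e w) - Lam w) \<le> - Lam w / (6 * real n)" .
  thus ?thesis using sum_minus_const[of "\<lambda>e. Lam (avg_step e w)" "Lam w"]
    by (simp add: algebra_simps)
qed

end


definition SS :: "nat set set \<Rightarrow> nat \<Rightarrow> nat set list set" where
  "SS E t = {es. set es \<subseteq> E \<and> length es = t}"

definition Ex :: "nat set set \<Rightarrow> (nat \<Rightarrow> real) \<Rightarrow> nat \<Rightarrow> ((nat \<Rightarrow> real) \<Rightarrow> real) \<Rightarrow> real" where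
  "Ex E v0 t h = (\<Sum>es\<in>SS E t. h (run_avg es v0)) / real (card E) ^ t"

lemma expected_Ex: "expected_l1_dist V E t v0 = Ex E v0 t (\<lambda>w. l1norm V (\<lambda>k. w k - mean_vec V v0 k))"
  unfolding expected_l1_dist_def Ex_def SS_def ..

lemma run_avg_snoc: "run_avg (es @ [e]) v = avg_step e (run_avg es v)"
  unfolding run_avg_def by simp

lemma SS_0: "SS E 0 = {[]}" unfolding SS_def by auto

lemma Ex_0: "Ex E v0 0 h = h v0"
  unfolding Ex_def SS_0 by (simp add: run_avg_def)

lemma finite_SS: "finite E \<Longrightarrow> finite (SS E t)"
  unfolding SS_def by (rule finite_lists_length_eq)

lemma card_SS: "finite E \<Longrightarrow> card (SS E t) = card E ^ t"
  unfolding SS_def by (rule card_lists_length_eq)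

lemma SS_Suc: "SS E (Suc t) = (\<lambda>(es,e). es @ [e]) ` (SS E t \<times> E)"
proof
  show "SS E (Suc t) \<subseteq> (\<lambda>(es,e). es @ [e]) ` (SS E t \<times> E)"
  proof
    fix xs assume xs: "xs \<in> SS E (Suc t)"
    then have ne: "xs \<noteq> []" and sx: "set xs \<subseteq> E" and lx: "length xs = Suc t" by (auto simp: SS_def)
    have eq: "xs = butlast xs @ [last xs]" using ne by simp
    have "set (butlast xs) \<subseteq> E" using sx by (meson in_set_butlastD subset_iff)
    moreover have "length (butlast xs) = t" using lx by simp
    moreover have "last xs \<in> E" using sx ne last_in_set by blast
    ultimately have "(butlast xs, last xs) \<in> SS E t \<times> E" by (simp add: SS_def)
    thus "xs \<in> (\<lambda>(es,e). es @ [e]) ` (SS E t \<times> E)" using eq by (auto intro!: image_eqI[of _ _ "(butlast xs, last xs)"])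
  qed
  show "(\<lambda>(es,e). es @ [e]) ` (SS E t \<times> E) \<subseteq> SS E (Suc t)" by (auto simp: SS_def)
qed

lemma inj_snoc: "inj_on (\<lambda>(es,e). es @ [e]) X"
  by (auto simp: inj_on_def)

lemma sum_SS_Suc:
  assumes "finite E"
  shows "(\<Sum>xs\<in>SS E (Suc t). G xs) = (\<Sum>es\<in>SS E t. \<Sum>e\<in>E. G (es @ [e]))"
proof -
  have "(\<Sum>xs\<in>SS E (Suc t). G xs) = (\<Sum>p\<in>SS E t \<times> E. G (fst p @ [snd p]))"
    unfolding SS_Suc by (subst sum.reindex[OF inj_snoc]) (simp add: case_prod_beta)
  also have "\<dots> = (\<Sum>es\<in>SS E t. \<Sum>e\<in>E. G (es @ [e]))"
    by (simp add: sum.cartesian_product case_prod_beta)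
  finally show ?thesis .
qed

lemma Ex_Suc_le:
  assumes fin: "finite E" and pos: "card E > 0"
    and st: "\<And>w. (\<Sum>e\<in>E. h (avg_step e w)) \<le> g w"
  shows "Ex E v0 (Suc t) h \<le> Ex E v0 t g / real (card E)"
proof -
  have "(\<Sum>xs\<in>SS E (Suc t). h (run_avg xs v0)) = (\<Sum>es\<in>SS E t. \<Sum>e\<in>E. h (avg_step e (run_avg es v0)))"
    using sum_SS_Suc[OF fin, of "\<lambda>xs. h (run_avg xs v0)"] by (simp add: run_avg_snoc)
  also have "\<dots> \<le> (\<Sum>es\<in>SS E t. g (run_avg es v0))"
    by (rule sum_mono) (rule st)
  finally have "(\<Sum>xs\<in>SS E (Suc t). h (run_avg xs v0)) \<le> (\<Sum>es\<in>SS E t. g (run_avg es v0))" .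
  hence "(\<Sum>xs\<in>SS E (Suc t). h (run_avg xs v0)) / real (card E) ^ Suc t
       \<le> (\<Sum>es\<in>SS E t. g (run_avg es v0)) / real (card E) ^ Suc t"
    using pos by (intro divide_right_mono) auto
  thus ?thesis unfolding Ex_def using pos by (simp add: field_simps)
qed

lemma Ex_Suc_eq:
  assumes fin: "finite E" and pos: "card E > 0"
    and st: "\<And>w. (\<Sum>e\<in>E. h (avg_step e w)) = g w"
  shows "Ex E v0 (Suc t) h = Ex E v0 t g / real (card E)"
proof -
  have "(\<Sum>xs\<in>SS E (Suc t). h (run_avg xs v0)) = (\<Sum>es\<in>SS E t. \<Sum>e\<in>E. h (avg_step e (run_avg es v0)))"
    using sum_SS_Suc[OF fin, of "\<lambda>xs. h (run_avg xs v0)"] by (simp add: run_avg_snoc)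
  also have "\<dots> = (\<Sum>es\<in>SS E t. g (run_avg es v0))"
    by (rule sum.cong) (simp_all add: st)
  finally show ?thesis unfolding Ex_def using pos by (simp add: field_simps)
qed

lemma Ex_mono:
  assumes "finite E" "\<And>es. es \<in> SS E t \<Longrightarrow> h (run_avg es v0) \<le> g (run_avg es v0)"
  shows "Ex E v0 t h \<le> Ex E v0 t g"
  unfolding Ex_def by (intro divide_right_mono sum_mono assms) auto

lemma Ex_add: "Ex E v0 t (\<lambda>w. h w + g w) = Ex E v0 t h + Ex E v0 t g"
  unfolding Ex_def by (simp add: sum.distrib add_divide_distrib)

lemma Ex_cmult: "Ex E v0 t (\<lambda>w. a * h w) = a * Ex E v0 t h"
  unfolding Ex_def by (simp add: sum_distrib_left[symmetric])

lemma Ex_const: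
  assumes "finite E" "card E > 0"
  shows "Ex E v0 t (\<lambda>w. c) = c"
  unfolding Ex_def using assms by (auto simp: card_SS)

lemma run_avg_sum:
  assumes finV: "finite V" and pairs: "\<And>e. e \<in> E \<Longrightarrow> \<exists>i j. e = {i,j} \<and> i \<noteq> j \<and> i \<in> V \<and> j \<in> V"
  shows "set es \<subseteq> E \<Longrightarrow> (\<Sum>k\<in>V. run_avg es v k) = (\<Sum>k\<in>V. v k)"
proof (induction es arbitrary: v)
  case Nil
  then show ?case by (simp add: run_avg_def)
next
  case (Cons e es)
  have "e \<in> E" using Cons.prems by simp
  then obtain i j where ij: "e = {i,j}" "i \<noteq> j" "i \<in> V" "j \<in> V" using pairs by blast
  have "(\<Sum>k\<in>V. avg_step e v k) = (\<Sum>k\<in>V. v k)"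
    using sum_avg_pair[of V i j "\<lambda>k x. x" v] ij finV by simp
  moreover have "run_avg (e # es) v = run_avg es (avg_step e v)" by (simp add: run_avg_def)
  ultimately show ?case using Cons by simp
qed



lemma pow_exp_bound:
  fixes q a :: real
  assumes q0: "0 \<le> q" and qa: "q \<le> 1 - a" and a0: "0 \<le> a"
  shows "q ^ T \<le> 1 / (1 + a * real T)"
proof -
  have "q ^ T \<le> (1 - a) ^ T" using q0 qa by (intro power_mono) auto
  also have "\<dots> \<le> exp (-a) ^ T"
  proof (rule power_mono)
    show "1 - a \<le> exp (-a)" using exp_ge_add_one_self[of "-a"] by simp
    show "0 \<le> 1 - a" using q0 qa by simp
  qed
  also have "\<dots> = exp (real T * (-a))" by (rule exp_of_nat_mult[symmetric])
  also have "\<dots> = 1 / exp (a * real T)" by (simp add: exp_minus field_simps)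
  also have "\<dots> \<le> 1 / (1 + a * real T)"
  proof (rule divide_left_mono)
    show "1 + a * real T \<le> exp (a * real T)" by (rule exp_ge_add_one_self)
    have "0 \<le> a * real T" using a0 by simp
    hence p: "0 < 1 + a * real T" by linarith
    thus "0 < exp (a * real T) * (1 + a * real T)" by simp
  qed simp
  finally show ?thesis .
qed

lemma amgm_abs:
  fixes z s :: real
  assumes "s > 0"
  shows "\<bar>z\<bar> \<le> (z^2 / s + s) / 2"
proof -
  have "0 \<le> (\<bar>z\<bar> - s)^2" by simp
  hence "2 * s * \<bar>z\<bar> \<le> z^2 + s^2" by (simp add: power2_eq_square algebra_simps)
  hence "\<bar>z\<bar> \<le> (z^2 + s^2) / (2 * s)" using assms by (simp add: field_simps)
  also have "\<dots> = (z^2 / s + s) / 2" using assms by (simp add: field_simps power2_eq_square)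
  finally show ?thesis .
qed

lemma Ex_lin2: "Ex E v0 t (\<lambda>w. a * h w + g w / b) = a * Ex E v0 t h + Ex E v0 t g / b"
  unfolding Ex_def by (simp add: sum.distrib sum_distrib_left sum_divide_distrib add_divide_distrib; simp add: mult.commute)

context db begin

definition rho :: real where "rho = 1 - 1 / (6 * real n * real (card E))"
definition rr :: real where "rr = 1 - real n / (2 * real (card E))"

lemma Epos: "real (card E) > 0" using cardE_pos by simp

lemma rho_bounds: "0 \<le> rho" "rho \<le> 1 - 1 / (6 * real n ^ 3)"
proof -
  have a: "6 * real n * real (card E) \<ge> 1"
  proof -
    have "real n * real (card E) \<ge> 1 * 1" using n1 cardE_pos by (intro mult_mono) auto
    thus ?thesis by simp
  qed
  thus "0 \<le> rho" unfolding rho_def by (simp add: field_simps)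
  have "6 * real n * real (card E) \<le> 6 * real n ^ 3"
    using cardE_le n1 by (simp add: power3_eq_cube power2_eq_square mult_left_mono)
  hence "1 / (6 * real n ^ 3) \<le> 1 / (6 * real n * real (card E))"
    using a Epos n1 by (intro divide_left_mono) auto
  thus "rho \<le> 1 - 1 / (6 * real n ^ 3)" unfolding rho_def by simp
qed

lemma rr_bounds: "0 \<le> rr" "rr \<le> 1 - 1 / (2 * real n)"
proof -
  show "0 \<le> rr" unfolding rr_def using cardE_ge Epos by (simp add: field_simps)
  have "real n / (2 * real (card E)) \<ge> real n / (2 * real n ^ 2)"
    using cardE_le n1 Epos by (intro divide_left_mono) auto
  moreover have "real n / (2 * real n ^ 2) = 1 / (2 * real n)"
    using n1 by (simp add: power2_eq_square)
  ultimately show "rr \<le> 1 - 1 / (2 * real n)" unfolding rr_def by simp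
qed

lemma Lam_decay: "Ex E v0 t Lam \<le> rho ^ t * Lam v0"
proof (induction t)
  case 0
  then show ?case by (simp add: Ex_0)
next
  case (Suc t)
  have "Ex E v0 (Suc t) Lam \<le> Ex E v0 t (\<lambda>w. (real (card E) - 1 / (6 * real n)) * Lam w) / real (card E)"
    by (rule Ex_Suc_le[OF finE cardE_pos stepLam])
  also have "\<dots> = rho * Ex E v0 t Lam"
    unfolding Ex_cmult rho_def using Epos n1 by (simp add: field_simps)
  also have "\<dots> \<le> rho * (rho ^ t * Lam v0)"
    using Suc rho_bounds(1) by (rule mult_left_mono)
  finally show ?case by simp
qed

lemma DD_Lam: "(real n)^2 * (DD w)^2 \<le> Lam w"
proof -
  have "bb \<ge> 0" unfolding bb_def by simp
  hence "bb * FF w \<ge> 0" using FF_nonneg by simp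
  thus ?thesis unfolding Lam_def by simp
qed

lemma key_rate: "22 / real n ^ 3 * rr + 11 / (2 * real (card E) * (real n)^2) \<le> 22 / real n ^ 3 * rho"
proof -
  define X where "X = 1 / ((real n)^2 * real (card E))"
  have X0: "X > 0" unfolding X_def using Epos n1 by simp
  have e1: "22 / real n ^ 3 * rho - 22 / real n ^ 3 * rr = 11 * X - (11/3) * X / (real n)^2"
    unfolding X_def rho_def rr_def using Epos n1 by (simp add: field_simps power2_eq_square power3_eq_cube)
  have e2: "11 / (2 * real (card E) * (real n)^2) = (11/2) * X"
    unfolding X_def by (simp add: field_simps)
  have nn: "1 * 1 \<le> real n * real n" using n1 by (intro mult_mono) auto
  have "X / (real n)^2 \<le> X" using X0 nn by (simp add: field_simps power2_eq_square mult_le_cancel_left1)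
  hence "11 * X - (11/3) * X / (real n)^2 \<ge> (11/2) * X" using X0 by simp
  thus ?thesis using e1 e2 by linarith
qed

lemma F_decay:
  assumes L11: "Lam v0 \<le> 11"
  shows "Ex E v0 t FF \<le> rr ^ t * FF v0 + 22 / real n ^ 3 * rho ^ t"
proof (induction t)
  case 0
  then show ?case by (simp add: Ex_0)
next
  case (Suc t)
  define A where "A = 22 / real n ^ 3"
  have "Ex E v0 (Suc t) FF \<le> Ex E v0 t (\<lambda>w. (real (card E) - real n / 2) * FF w + (DD w)^2 / 2) / real (card E)"
    by (rule Ex_Suc_le[OF finE cardE_pos stepF])
  also have "\<dots> = rr * Ex E v0 t FF + Ex E v0 t (\<lambda>w. (DD w)^2) / (2 * real (card E))"
    unfolding Ex_lin2 rr_def using Epos by (simp add: field_simps)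
  also have "Ex E v0 t (\<lambda>w. (DD w)^2) \<le> Ex E v0 t (\<lambda>w. (1 / (real n)^2) * Lam w)"
  proof (rule Ex_mono[OF finE])
    fix es
    have "(real n)^2 * (DD (run_avg es v0))^2 \<le> Lam (run_avg es v0)" by (rule DD_Lam)
    thus "(DD (run_avg es v0))^2 \<le> 1 / (real n)^2 * Lam (run_avg es v0)"
      using n1 by (simp add: field_simps)
  qed
  also have "\<dots> = Ex E v0 t Lam / (real n)^2" unfolding Ex_cmult by simp
  also have "\<dots> \<le> rho ^ t * 11 / (real n)^2"
  proof -
    have "Ex E v0 t Lam \<le> rho ^ t * 11"
      using Lam_decay[of v0 t] mult_left_mono[OF L11 zero_le_power[OF rho_bounds(1)], of t] by linarith
    thus ?thesis by (simp add: divide_right_mono)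
  qed
  finally have s1: "Ex E v0 (Suc t) FF \<le> rr * Ex E v0 t FF + rho ^ t * 11 / (real n)^2 / (2 * real (card E))"
    using Epos by (simp add: divide_right_mono)
  have s2: "rr * Ex E v0 t FF \<le> rr * (rr ^ t * FF v0 + A * rho ^ t)"
    using Suc rr_bounds(1) unfolding A_def by (rule mult_left_mono)
  have s3: "rho ^ t * (A * rr + 11 / (2 * real (card E) * (real n)^2)) \<le> rho ^ t * (A * rho)"
    using key_rate rho_bounds(1) unfolding A_def by (intro mult_left_mono) auto
  have "Ex E v0 (Suc t) FF \<le> rr * (rr ^ t * FF v0) + rho ^ t * (A * rr + 11 / (2 * real (card E) * (real n)^2))"
    using s1 s2 by (simp add: algebra_simps)
  also have "\<dots> \<le> rr * (rr ^ t * FF v0) + rho ^ t * (A * rho)" using s3 by simp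
  finally show ?case unfolding A_def by (simp add: algebra_simps)
qed

end


lemma final_arith:
  fixes n d P Q K :: real
  assumes n: "n \<ge> 1" and d: "d > 0" and K: "K \<ge> 1" and P: "P \<ge> 0" "n * P \<le> 1 / K"
    and Q: "Q \<ge> 0" "Q \<le> 1 / K" and Kd: "34 \<le> 3 * K * d^2"
  shows "(P + 22 / n^3 * Q) / (2 * (d / n)) + n * (d / n) + 11 * Q / (2 * d) + d / 2 \<le> 3 * d"
proof -
  have n0: "n > 0" using n by simp
  have e: "(P + 22 / n^3 * Q) / (2 * (d / n)) = (n * P + 22 * (Q / n^2)) / (2 * d)"
    using n0 d by (simp add: field_simps power2_eq_square power3_eq_cube)
  have q2: "Q / n^2 \<le> Q"
  proof -
    have "1 \<le> n^2" using n by (simp add: one_le_power)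
    thus ?thesis using Q(1) by (simp add: divide_le_eq mult_le_cancel_left1 mult.commute)
  qed
  have "n * P + 22 * (Q / n^2) \<le> 1/K + 22 * (1/K)" using P(2) q2 Q(2) by linarith
  hence a: "(n * P + 22 * (Q / n^2)) / (2 * d) \<le> (23 / K) / (2 * d)"
    using d by (intro divide_right_mono) auto
  have b: "11 * Q / (2 * d) \<le> (11 / K) / (2 * d)" using Q(2) d by (intro divide_right_mono) auto
  have c: "(23 / K) / (2 * d) + (11 / K) / (2 * d) = 17 / (K * d)" using d K by (simp add: field_simps)
  have f: "17 / (K * d) \<le> 3 * d / 2"
    using Kd d K by (simp add: field_simps power2_eq_square)
  have g: "n * (d / n) = d" using n0 by simp
  show ?thesis unfolding e g using a b c f by linarith
qed

context db begin

lemma V_split: "(\<Sum>k\<in>V. f k) = (\<Sum>k\<in>L. f k) + (\<Sum>k\<in>R. f k)"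
proof -
  have "V = L \<union> R" by auto
  hence "(\<Sum>k\<in>V. f k) = (\<Sum>k\<in>L \<union> R. f k)" by simp
  also have "\<dots> = (\<Sum>k\<in>L. f k) + (\<Sum>k\<in>R. f k)" by (rule sum.union_disjoint) auto
  finally show ?thesis .
qed

lemma half_sum:
  fixes A :: "nat set" and m :: "nat \<Rightarrow> real"
  assumes "finite A" "s > 0"
  shows "(\<Sum>k\<in>A. ((m k)^2 / s + s) / 2 + c) = (\<Sum>k\<in>A. (m k)^2) / (2 * s) + real (card A) * (s / 2 + c)"
proof -
  have "(\<Sum>k\<in>A. ((m k)^2 / s + s) / 2 + c) = (\<Sum>k\<in>A. (1 / (2 * s)) * (m k)^2 + (s / 2 + c))"
    using assms by (intro sum.cong refl) (simp add: field_simps)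
  also have "\<dots> = (1 / (2 * s)) * (\<Sum>k\<in>A. (m k)^2) + real (card A) * (s / 2 + c)"
    by (simp add: sum.distrib sum_distrib_left)
  finally show ?thesis by simp
qed

lemma l1_bound:
  assumes sumw: "(\<Sum>k\<in>V. w k) = (\<Sum>k\<in>V. v0 k)" and s: "s > 0" and sq: "sq > 0"
  shows "l1norm V (\<lambda>k. w k - mean_vec V v0 k)
     \<le> FF w / (2* s) + real n * s + (real n)^2 * (DD w)^2 / (2* sq) + sq/2"
proof -
  define mL where "mL = SA L w / n"
  define mR where "mR = SA R w / n"
  have np: "real n > 0" using n1 by simp
  have cV: "real (card V) = 2 * real n" by simp
  have mu: "\<And>k. mean_vec V v0 k = (SA L w + SA R w) / (2 * real n)"
    unfolding mean_vec_def cV using sumw V_split[of w] by (simp add: SA_def)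
  have dL: "\<And>k. w k - mean_vec V v0 k = (w k - mL) + DD w / 2"
    unfolding mu mL_def DD_def using np by (simp add: field_simps)
  have dR: "\<And>k. w k - mean_vec V v0 k = (w k - mR) - DD w / 2"
    unfolding mu mR_def DD_def using np by (simp add: field_simps)
  have bL: "(\<Sum>k\<in>L. \<bar>w k - mean_vec V v0 k\<bar>) \<le> (\<Sum>k\<in>L. ((w k - mL)^2 / s + s) / 2 + \<bar>DD w\<bar> / 2)"
  proof (rule sum_mono)
    fix k
    have "\<bar>(w k - mL) + DD w / 2\<bar> \<le> \<bar>w k - mL\<bar> + \<bar>DD w\<bar> / 2" by (simp add: abs_triangle_ineq[THEN order_trans])
    also have "\<dots> \<le> ((w k - mL)^2 / s + s) / 2 + \<bar>DD w\<bar> / 2" using amgm_abs[OF s, of "w k - mL"] by simp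
    finally show "\<bar>w k - mean_vec V v0 k\<bar> \<le> ((w k - mL)^2 / s + s) / 2 + \<bar>DD w\<bar> / 2" unfolding dL .
  qed
  have bR: "(\<Sum>k\<in>R. \<bar>w k - mean_vec V v0 k\<bar>) \<le> (\<Sum>k\<in>R. ((w k - mR)^2 / s + s) / 2 + \<bar>DD w\<bar> / 2)"
  proof (rule sum_mono)
    fix k
    have "\<bar>(w k - mR) - DD w / 2\<bar> \<le> \<bar>w k - mR\<bar> + \<bar>DD w\<bar> / 2" by (simp add: abs_triangle_ineq4[THEN order_trans])
    also have "\<dots> \<le> ((w k - mR)^2 / s + s) / 2 + \<bar>DD w\<bar> / 2" using amgm_abs[OF s, of "w k - mR"] by simp
    finally show "\<bar>w k - mean_vec V v0 k\<bar> \<le> ((w k - mR)^2 / s + s) / 2 + \<bar>DD w\<bar> / 2" unfolding dR .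
  qed
  have vL: "(\<Sum>k\<in>L. (w k - mL)^2) = QA L w - (SA L w)^2 / n"
    using var_eq[of L w] n1 unfolding mL_def by simp
  have vR: "(\<Sum>k\<in>R. (w k - mR)^2) = QA R w - (SA R w)^2 / n"
    using var_eq[of R w] n1 unfolding mR_def by simp
  have "l1norm V (\<lambda>k. w k - mean_vec V v0 k)
      = (\<Sum>k\<in>L. \<bar>w k - mean_vec V v0 k\<bar>) + (\<Sum>k\<in>R. \<bar>w k - mean_vec V v0 k\<bar>)"
    unfolding l1norm_def by (rule V_split)
  also have "\<dots> \<le> (\<Sum>k\<in>L. ((w k - mL)^2 / s + s) / 2 + \<bar>DD w\<bar> / 2) + (\<Sum>k\<in>R. ((w k - mR)^2 / s + s) / 2 + \<bar>DD w\<bar> / 2)"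
    using bL bR by linarith
  also have "\<dots> = FF w / (2* s) + real n * s + real n * \<bar>DD w\<bar>"
    unfolding half_sum[OF finite_atLeastAtMost s] vL vR FF_def using s by (simp add: field_simps)
  also have "real n * \<bar>DD w\<bar> \<le> ((real n)^2 * (DD w)^2 / sq + sq) / 2"
    using amgm_abs[OF sq, of "real n * DD w"] by (simp add: abs_mult power_mult_distrib)
  finally show ?thesis by (simp add: field_simps)
qed

lemma v0_bounds:
  assumes "l1norm V v0 = 1"
  shows "FF v0 \<le> 1" "Lam v0 \<le> 11"
proof -
  have s1: "(\<Sum>k\<in>V. \<bar>v0 k\<bar>) = 1" using assms unfolding l1norm_def .
  have each: "\<And>k. k \<in> V \<Longrightarrow> \<bar>v0 k\<bar> \<le> 1"
  proof -
    fix k assume "k \<in> V"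
    hence "\<bar>v0 k\<bar> \<le> (\<Sum>j\<in>V. \<bar>v0 j\<bar>)" by (intro member_le_sum) auto
    thus "\<bar>v0 k\<bar> \<le> 1" using s1 by simp
  qed
  have sq: "(\<Sum>k\<in>V. (v0 k)^2) \<le> 1"
  proof -
    have "(\<Sum>k\<in>V. (v0 k)^2) \<le> (\<Sum>k\<in>V. \<bar>v0 k\<bar>)"
    proof (rule sum_mono)
      fix k assume "k \<in> V"
      have "(v0 k)^2 = \<bar>v0 k\<bar> * \<bar>v0 k\<bar>" by (simp add: power2_eq_square)
      also have "\<dots> \<le> \<bar>v0 k\<bar> * 1" using each[OF \<open>k \<in> V\<close>] by (intro mult_left_mono) auto
      finally show "(v0 k)^2 \<le> \<bar>v0 k\<bar>" by simp
    qed
    thus ?thesis using s1 by simp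
  qed
  have "FF v0 \<le> QA L v0 + QA R v0"
    unfolding FF_def by (simp add: add_mono)
  also have "\<dots> = (\<Sum>k\<in>V. (v0 k)^2)" unfolding QA_def by (rule V_split[symmetric])
  finally show F1: "FF v0 \<le> 1" using sq by simp
  have "\<bar>SA L v0 - SA R v0\<bar> \<le> \<bar>SA L v0\<bar> + \<bar>SA R v0\<bar>" by (rule abs_triangle_ineq4)
  also have "\<dots> \<le> (\<Sum>k\<in>L. \<bar>v0 k\<bar>) + (\<Sum>k\<in>R. \<bar>v0 k\<bar>)" unfolding SA_def by (intro add_mono sum_abs)
  also have "\<dots> = 1" using s1 V_split[of "\<lambda>k. \<bar>v0 k\<bar>"] by simp
  finally have ab: "\<bar>SA L v0 - SA R v0\<bar> \<le> 1" .
  have "(real n)^2 * (DD v0)^2 = (SA L v0 - SA R v0)^2"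
    unfolding DD_def using n1 by (simp add: power_divide)
  also have "\<dots> = \<bar>SA L v0 - SA R v0\<bar>^2" by simp
  also have "\<dots> \<le> 1" using ab by (intro power_le_one) auto
  finally have D1: "(real n)^2 * (DD v0)^2 \<le> 1" .
  have "bb * FF v0 \<le> 10 * 1"
    using F1 FF_nonneg[of v0] by (intro mult_mono) (auto simp: bb_def)
  thus "Lam v0 \<le> 11" unfolding Lam_def using D1 by simp
qed

lemma upper:
  fixes \<epsilon> :: real and K :: nat
  assumes eps: "0 < \<epsilon>" and K1: "1 \<le> K" and K2: "108 \<le> real K * \<epsilon>^2"
    and v0: "l1norm V v0 = 1"
  shows "expected_l1_dist V E (18 * K * n^3) v0 \<le> \<epsilon>"
proof -
  define T where "T = 18 * K * n^3"
  define d where "d = \<epsilon> / 3"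
  define s where "s = d / real n"
  have np: "real n > 0" using n1 by simp
  have d0: "d > 0" unfolding d_def using eps by simp
  have s0: "s > 0" unfolding s_def using d0 np by simp
  have "expected_l1_dist V E T v0 = Ex E v0 T (\<lambda>w. l1norm V (\<lambda>k. w k - mean_vec V v0 k))"
    by (rule expected_Ex)
  also have "\<dots> \<le> Ex E v0 T (\<lambda>w. (1 / (2* s)) * FF w + ((1 / (2*d)) * ((real n)^2 * (DD w)^2) + (real n * s + d/2)))"
  proof (rule Ex_mono[OF finE])
    fix es assume "es \<in> SS E T"
    hence "set es \<subseteq> E" by (simp add: SS_def)
    moreover have "finite V" by simp
    ultimately have "(\<Sum>k\<in>V. run_avg es v0 k) = (\<Sum>k\<in>V. v0 k)"
      using run_avg_sum[OF _ E_pair] by blast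
    from l1_bound[OF this s0 d0]
    show "l1norm V (\<lambda>k. run_avg es v0 k - mean_vec V v0 k)
        \<le> (1 / (2* s)) * FF (run_avg es v0) + ((1 / (2*d)) * ((real n)^2 * (DD (run_avg es v0))^2) + (real n * s + d/2))"
      by (simp add: field_simps)
  qed
  also have "\<dots> = (1 / (2* s)) * Ex E v0 T FF + ((1 / (2*d)) * Ex E v0 T (\<lambda>w. (real n)^2 * (DD w)^2) + (real n * s + d/2))"
    unfolding Ex_add Ex_cmult Ex_const[OF finE cardE_pos] ..
  finally have main: "expected_l1_dist V E T v0 \<le> (1 / (2* s)) * Ex E v0 T FF + ((1 / (2*d)) * Ex E v0 T (\<lambda>w. (real n)^2 * (DD w)^2) + (real n * s + d/2))" .
  have LB: "FF v0 \<le> 1" "Lam v0 \<le> 11" using v0_bounds[OF v0] by auto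
  define P where "P = rr ^ T"
  define Q where "Q = rho ^ T"
  have P0: "P \<ge> 0" unfolding P_def using rr_bounds by simp
  have Q0: "Q \<ge> 0" unfolding Q_def using rho_bounds by simp
  have EF: "Ex E v0 T FF \<le> P + 22 / real n ^ 3 * Q"
  proof -
    have "Ex E v0 T FF \<le> P * FF v0 + 22 / real n ^ 3 * Q" using F_decay[OF LB(2)] unfolding P_def Q_def by simp
    also have "P * FF v0 \<le> P * 1" using P0 LB(1) by (intro mult_left_mono) auto
    finally show ?thesis by simp
  qed
  have ED: "Ex E v0 T (\<lambda>w. (real n)^2 * (DD w)^2) \<le> 11 * Q"
  proof -
    have "Ex E v0 T (\<lambda>w. (real n)^2 * (DD w)^2) \<le> Ex E v0 T Lam"
      by (rule Ex_mono[OF finE]) (rule DD_Lam)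
    also have "\<dots> \<le> Q * Lam v0" unfolding Q_def by (rule Lam_decay)
    also have "\<dots> \<le> Q * 11" using Q0 LB(2) by (intro mult_left_mono) auto
    finally show ?thesis by simp
  qed
  have TK: "real T = 18 * real K * real n ^ 3" unfolding T_def by simp
  have QK: "Q \<le> 1 / real K"
  proof -
    have "Q \<le> 1 / (1 + 1 / (6 * real n ^ 3) * real T)"
      unfolding Q_def using rho_bounds by (intro pow_exp_bound) auto
    also have "1 + 1 / (6 * real n ^ 3) * real T = 1 + 3 * real K" unfolding TK using np by (simp add: field_simps)
    also have "1 / (1 + 3 * real K) \<le> 1 / real K" using K1 by (intro divide_left_mono) auto
    finally show ?thesis .
  qed
  have PK: "real n * P \<le> 1 / real K"
  proof -
    have "P \<le> 1 / (1 + 1 / (2 * real n) * real T)"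
      unfolding P_def using rr_bounds np by (intro pow_exp_bound) auto
    also have "1 + 1 / (2 * real n) * real T = 1 + 9 * real K * (real n)^2" unfolding TK using np
      by (simp add: field_simps power2_eq_square power3_eq_cube)
    finally have "real n * P \<le> real n * (1 / (1 + 9 * real K * (real n)^2))" using np by (intro mult_left_mono) auto
    also have "\<dots> \<le> 1 / real K"
    proof -
      have "real n * real K \<le> 1 + 9 * real K * (real n)^2"
      proof -
        have "real n \<le> (real n)^2" using n1 by (simp add: power2_eq_square)
        hence a: "real n * real K \<le> real K * (real n)^2" using K1 by (simp add: mult_right_mono mult.commute)
        have b: "0 \<le> real K * (real n)^2" by simp
        have "real n * real K \<le> 1 + 9 * (real K * (real n)^2)" using a b by linarith
        thus ?thesis by (simp add: mult.assoc)
      qed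
      moreover have pos: "0 < 1 + 9 * real K * (real n)^2" by (intro add_pos_nonneg) auto
      ultimately have q: "real n * real K / (1 + 9 * real K * (real n)^2) \<le> 1"
        by (simp add: divide_le_eq_1)
      have Kp: "real K > 0" using K1 by simp
      have "real n * (1 / (1 + 9 * real K * (real n)^2)) = (real n * real K / (1 + 9 * real K * (real n)^2)) / real K"
        using Kp by simp
      also have "\<dots> \<le> 1 / real K" using q Kp by (intro divide_right_mono) auto
      finally show ?thesis .
    qed
    finally show ?thesis .
  qed
  have Kd: "34 \<le> 3 * real K * d^2" using K2 unfolding d_def by (simp add: power2_eq_square field_simps)
  have "(1 / (2* s)) * Ex E v0 T FF \<le> (1 / (2* s)) * (P + 22 / real n ^ 3 * Q)"
    using EF s0 by (intro mult_left_mono) auto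
  moreover have "(1 / (2*d)) * Ex E v0 T (\<lambda>w. (real n)^2 * (DD w)^2) \<le> (1 / (2*d)) * (11 * Q)"
    using ED d0 by (intro mult_left_mono) auto
  moreover have "(P + 22 / real n ^ 3 * Q) / (2 * (d / real n)) + real n * (d / real n) + 11 * Q / (2 * d) + d / 2 \<le> 3 * d"
    by (rule final_arith) (use n1 d0 K1 P0 PK Q0 QK Kd in auto)
  moreover have "(1 / (2 * s)) * (P + 22 / real n ^ 3 * Q) = (P + 22 / real n ^ 3 * Q) / (2 * (d / real n))"
    unfolding s_def by simp
  moreover have "(1 / (2 * d)) * (11 * Q) = 11 * Q / (2 * d)" by simp
  moreover have "real n * s = real n * (d / real n)" unfolding s_def ..
  ultimately have "expected_l1_dist V E T v0 \<le> 3 * d" using main by linarith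
  thus ?thesis unfolding T_def d_def by simp
qed

end


lemma sum_delta_lin:
  fixes f :: "nat \<Rightarrow> real"
  assumes "finite A" "p \<in> A"
  shows "(\<Sum>k\<in>A. (c + (if k = p then d else 0)) * f k) = c * (\<Sum>k\<in>A. f k) + d * f p"
proof -
  have "(\<Sum>k\<in>A. (c + (if k = p then d else 0)) * f k) = (\<Sum>k\<in>A. c * f k + (if k = p then d * f k else 0))"
    by (intro sum.cong refl) (auto simp: algebra_simps)
  also have "\<dots> = c * (\<Sum>k\<in>A. f k) + d * f p"
    using assms by (simp add: sum.distrib sum_distrib_left)
  finally show ?thesis .
qed

context db begin

definition bq :: real where "bq = (sqrt ((real n)^2 + 4 * (real n - 1)) - real n) / 2"
definition lm :: real where "lm = 1 - bq"
definition uu :: "nat \<Rightarrow> real" where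
  "uu k = (if k \<in> L then 1 - (if k = n then lm else 0) else if k \<in> R then -1 + (if k = 2*n then lm else 0) else 0)"
definition phi :: "(nat \<Rightarrow> real) \<Rightarrow> real" where
  "phi w = (\<Sum>k\<in>V. uu k * w k)"

lemma bq_facts: "bq^2 + real n * bq = real n - 1" "0 \<le> bq" "bq \<le> 1"
proof -
  define S where "S = sqrt ((real n)^2 + 4 * (real n - 1))"
  have arg: "(real n)^2 + 4 * (real n - 1) \<ge> (real n)^2" using n1 by simp
  hence S2: "S^2 = (real n)^2 + 4 * (real n - 1)" unfolding S_def using n1 by simp
  have Sn: "S \<ge> real n" unfolding S_def using real_sqrt_le_mono[OF arg] by simp
  show e: "bq^2 + real n * bq = real n - 1"
    unfolding bq_def S_def[symmetric] using S2 by (simp add: power2_eq_square field_simps)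
  show b0: "0 \<le> bq" unfolding bq_def S_def[symmetric] using Sn by simp
  show "bq \<le> 1"
  proof (rule ccontr)
    assume "\<not> bq \<le> 1"
    hence "bq > 1" by simp
    hence "bq^2 > 1" by (simp add: one_less_power)
    moreover have "real n * bq \<ge> real n * 1" using \<open>bq > 1\<close> by (intro mult_left_mono) auto
    ultimately show False using e by linarith
  qed
qed

lemma lm_facts: "0 \<le> lm" "lm \<le> 1" "lm * (real n + 1) \<le> 2"
proof -
  show "0 \<le> lm" "lm \<le> 1" unfolding lm_def using bq_facts by auto
  have e: "lm * (real n + 2 - lm) = 2"
    using bq_facts(1) unfolding lm_def by (simp add: power2_eq_square algebra_simps)
  have "lm * (real n + 1) \<le> lm * (real n + 2 - lm)"
    using \<open>0 \<le> lm\<close> \<open>lm \<le> 1\<close> by (intro mult_left_mono) auto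
  thus "lm * (real n + 1) \<le> 2" using e by simp
qed

lemma uuL: "k \<in> L \<Longrightarrow> uu k = 1 + (if k = n then - lm else 0)"
  unfolding uu_def by simp
lemma uuR: "k \<in> R \<Longrightarrow> uu k = -1 + (if k = 2*n then lm else 0)"
  unfolding uu_def by auto

lemma sumL_uu_f: "(\<Sum>k\<in>L. uu k * f k) = (\<Sum>k\<in>L. f k) - lm * f n"
proof -
  have "(\<Sum>k\<in>L. uu k * f k) = (\<Sum>k\<in>L. (1 + (if k = n then - lm else 0)) * f k)"
    by (intro sum.cong refl) (simp add: uuL)
  also have "\<dots> = (\<Sum>k\<in>L. f k) - lm * f n"
    using sum_delta_lin[of L n 1 "- lm" f] n_in_L by simp
  finally show ?thesis .
qed

lemma sumR_uu_f: "(\<Sum>k\<in>R. uu k * f k) = - (\<Sum>k\<in>R. f k) + lm * f (2*n)"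
proof -
  have "(\<Sum>k\<in>R. uu k * f k) = (\<Sum>k\<in>R. (-1 + (if k = 2*n then lm else 0)) * f k)"
    by (intro sum.cong refl) (simp add: uuR)
  also have "\<dots> = - (\<Sum>k\<in>R. f k) + lm * f (2*n)"
    using sum_delta_lin[of R "2*n" "-1" lm f] n2_in_R by simp
  finally show ?thesis .
qed

lemma uu_n: "uu n = bq" unfolding uu_def lm_def using n1 by simp
lemma uu_2n: "uu (2*n) = - bq" unfolding uu_def lm_def using n1 by simp

lemma phi_pair:
  assumes "i \<in> V" "j \<in> V" "i \<noteq> j"
  shows "phi (avg_step {i,j} w) - phi w = - (uu i - uu j) * (w i - w j) / 2"
  unfolding phi_def using sum_avg_pair[of V i j "\<lambda>k x. uu k * x" w] assms
  by (simp add: algebra_simps add_divide_distrib diff_divide_distrib)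

lemma clL_sum_phi: "(\<Sum>e\<in>cl L. phi (avg_step e w) - phi w) = - (lm / 2) * (SA L w - real n * w n)"
proof -
  have "(\<Sum>e\<in>cl L. phi (avg_step e w) - phi w) = (\<Sum>i\<in>L. \<Sum>j\<in>L. - ((uu i - uu j) * (w i - w j)) / 2) / 2"
    by (rule clique_sum) (auto simp: phi_pair algebra_simps)
  also have "\<dots> = - (\<Sum>i\<in>L. \<Sum>j\<in>L. (uu i - uu j) * (w i - w j)) / 4"
    by (simp add: sum_negf sum_divide_distrib[symmetric])
  also have "\<dots> = - (2 * real n * (\<Sum>k\<in>L. uu k * w k) - 2 * (\<Sum>k\<in>L. uu k) * (\<Sum>k\<in>L. w k)) / 4"
    by (subst bilin_double_sum) simp_all
  also have "\<dots> = - (lm / 2) * (SA L w - real n * w n)"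
  proof -
    have X: "(\<Sum>k\<in>L. uu k * w k) = (\<Sum>k\<in>L. w k) - lm * w n" by (rule sumL_uu_f)
    have Y: "(\<Sum>k\<in>L. uu k) = real n - lm" using sumL_uu_f[of "\<lambda>k. 1"] by simp
    show ?thesis unfolding X Y SA_def by (simp add: field_simps)
  qed
  finally show ?thesis .
qed

lemma clR_sum_phi: "(\<Sum>e\<in>cl R. phi (avg_step e w) - phi w) = (lm / 2) * (SA R w - real n * w (2*n))"
proof -
  have RV: "\<And>k. k \<in> R \<Longrightarrow> k \<in> V" by auto
  have "(\<Sum>e\<in>cl R. phi (avg_step e w) - phi w) = (\<Sum>i\<in>R. \<Sum>j\<in>R. - ((uu i - uu j) * (w i - w j)) / 2) / 2"
    by (rule clique_sum) (auto simp: phi_pair algebra_simps)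
  also have "\<dots> = - (\<Sum>i\<in>R. \<Sum>j\<in>R. (uu i - uu j) * (w i - w j)) / 4"
    by (simp add: sum_negf sum_divide_distrib[symmetric])
  also have "\<dots> = - (2 * real n * (\<Sum>k\<in>R. uu k * w k) - 2 * (\<Sum>k\<in>R. uu k) * (\<Sum>k\<in>R. w k)) / 4"
    by (subst bilin_double_sum) simp_all
  also have "\<dots> = (lm / 2) * (SA R w - real n * w (2*n))"
  proof -
    have X: "(\<Sum>k\<in>R. uu k * w k) = - (\<Sum>k\<in>R. w k) + lm * w (2*n)" by (rule sumR_uu_f)
    have Y: "(\<Sum>k\<in>R. uu k) = - real n + lm" using sumR_uu_f[of "\<lambda>k. 1"] by simp
    show ?thesis unfolding X Y SA_def by (simp add: field_simps)
  qed
  finally show ?thesis .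
qed

lemma phi_split: "phi w = SA L w - lm * w n - SA R w + lm * w (2*n)"
  unfolding phi_def V_split[of "\<lambda>k. uu k * w k"] sumL_uu_f sumR_uu_f SA_def by simp

lemma step_phi: "(\<Sum>e\<in>E. phi (avg_step e w)) = (real (card E) - lm / 2) * phi w"
proof -
  have br: "phi (avg_step {n, 2*n} w) - phi w = - (uu n - uu (2*n)) * (w n - w (2*n)) / 2"
    by (rule phi_pair) (use n1 in auto)
  have lq: "lm^2 - (real n + 2) * lm + 2 = 0"
    using bq_facts(1) unfolding lm_def by (simp add: power2_eq_square algebra_simps)
  have "(\<Sum>e\<in>E. phi (avg_step e w) - phi w)
      = - (lm / 2) * (SA L w - real n * w n) + (lm / 2) * (SA R w - real n * w (2*n))
        - ((1 - lm) - (- (1 - lm))) * (w n - w (2*n)) / 2"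
    unfolding sumE clL_sum_phi clR_sum_phi br uu_n uu_2n by (simp add: lm_def)
  also have "\<dots> = - (lm / 2) * phi w + (lm^2 - (real n + 2) * lm + 2) * (w (2*n) - w n) / 2"
    unfolding phi_split by (simp add: power2_eq_square field_simps)
  also have "\<dots> = - (lm / 2) * phi w" unfolding lq by simp
  finally have "(\<Sum>e\<in>E. phi (avg_step e w) - phi w) = - (lm / 2) * phi w" .
  thus ?thesis using sum_minus_const[of "\<lambda>e. phi (avg_step e w)" "phi w"] by (simp add: algebra_simps)
qed

lemma Ex_phi: "Ex E v0 t phi = (1 - lm / (2 * real (card E))) ^ t * phi v0"
proof (induction t)
  case 0
  then show ?case by (simp add: Ex_0)
next
  case (Suc t)
  have "Ex E v0 (Suc t) phi = Ex E v0 t (\<lambda>w. (real (card E) - lm / 2) * phi w) / real (card E)"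
    by (rule Ex_Suc_eq[OF finE cardE_pos step_phi])
  also have "\<dots> = (1 - lm / (2 * real (card E))) * Ex E v0 t phi"
    unfolding Ex_cmult using Epos by (simp add: field_simps)
  finally show ?case using Suc by simp
qed

end


context db begin

lemma lower:
  fixes \<epsilon> :: real and t :: nat
  assumes eps0: "0 < \<epsilon>" and eps1: "\<epsilon> < 1" and nbig: "2 / (real n + 1) \<le> (1 - \<epsilon>) / 3"
    and tsmall: "real t \<le> (1 - \<epsilon>) / 3 * real n ^ 3"
  shows "\<exists>v0. l1norm V v0 = 1 \<and> \<epsilon> < expected_l1_dist V E t v0"
proof -
  define \<eta> where "\<eta> = 1 - \<epsilon>"
  have eta: "0 < \<eta>" "\<eta> < 1" unfolding \<eta>_def using eps0 eps1 by auto
  have n2: "real n \<ge> 2"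
  proof (rule ccontr)
    assume "\<not> real n \<ge> 2"
    hence "real n + 1 < 3" by simp
    hence "2 / 3 < 2 / (real n + 1)" by (intro divide_strict_left_mono) auto
    thus False using nbig eta unfolding \<eta>_def by simp
  qed
  have lmf: "0 \<le> lm" "lm \<le> 1" "lm * (real n + 1) \<le> 2" by (rule lm_facts)+
  define Z where "Z = 2 * (real n - lm)"
  have Z0: "Z > 0" unfolding Z_def using n2 lmf by simp
  define v0 where "v0 = (\<lambda>k. uu k / Z)"
  have uL: "\<And>k. k \<in> L \<Longrightarrow> 0 \<le> uu k \<and> uu k \<le> 1" using lmf by (simp add: uuL)
  have uR: "\<And>k. k \<in> R \<Longrightarrow> -1 \<le> uu k \<and> uu k \<le> 0" using lmf by (auto simp: uuR)
  have uabs: "\<And>k. \<bar>uu k\<bar> \<le> 1"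
  proof -
    fix k
    show "\<bar>uu k\<bar> \<le> 1"
    proof (cases "k \<in> L")
      case True thus ?thesis using uL by fastforce
    next
      case False
      thus ?thesis proof (cases "k \<in> R")
        case True thus ?thesis using uR by fastforce
      next
        case False
        hence "uu k = 0" using \<open>k \<notin> L\<close> unfolding uu_def by (simp only: if_False)
        thus ?thesis by simp
      qed
    qed
  qed
  have sL: "(\<Sum>k\<in>L. uu k) = real n - lm" using sumL_uu_f[of "\<lambda>k. 1"] by simp
  have sR: "(\<Sum>k\<in>R. uu k) = - real n + lm" using sumR_uu_f[of "\<lambda>k. 1"] by simp
  have aL: "(\<Sum>k\<in>L. \<bar>uu k\<bar>) = real n - lm"
    using sL uL by (metis (no_types, lifting) abs_of_nonneg sum.cong)
  have aR: "(\<Sum>k\<in>R. \<bar>uu k\<bar>) = real n - lm"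
  proof -
    have "(\<Sum>k\<in>R. \<bar>uu k\<bar>) = (\<Sum>k\<in>R. - uu k)" using uR by (intro sum.cong refl) (simp add: abs_of_nonpos)
    thus ?thesis using sR by (simp add: sum_negf)
  qed
  have l1: "l1norm V v0 = 1"
  proof -
    have "l1norm V v0 = (\<Sum>k\<in>V. \<bar>uu k\<bar>) / Z"
      unfolding l1norm_def v0_def using Z0 by (simp add: sum_divide_distrib)
    also have "\<dots> = 1" unfolding V_split aL aR Z_def using Z0 Z_def by simp
    finally show ?thesis .
  qed
  have mean0: "\<And>k. mean_vec V v0 k = 0"
  proof -
    fix k
    have "(\<Sum>k\<in>V. v0 k) = (\<Sum>k\<in>V. uu k) / Z" unfolding v0_def by (simp add: sum_divide_distrib)
    also have "(\<Sum>k\<in>V. uu k) = 0" unfolding V_split sL sR by simp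
    finally show "mean_vec V v0 k = 0" unfolding mean_vec_def by simp
  qed
  define mu where "mu = 1 - lm / (2 * real (card E))"
  have "expected_l1_dist V E t v0 = Ex E v0 t (\<lambda>w. l1norm V (\<lambda>k. w k - mean_vec V v0 k))"
    by (rule expected_Ex)
  also have "\<dots> \<ge> Ex E v0 t phi"
  proof (rule Ex_mono[OF finE])
    fix es
    show "phi (run_avg es v0) \<le> l1norm V (\<lambda>k. run_avg es v0 k - mean_vec V v0 k)"
      unfolding phi_def l1norm_def mean0
    proof (simp, rule sum_mono)
      fix k
      have "uu k * run_avg es v0 k \<le> \<bar>uu k\<bar> * \<bar>run_avg es v0 k\<bar>" by (metis abs_ge_self abs_mult)
      also have "\<dots> \<le> 1 * \<bar>run_avg es v0 k\<bar>" using uabs[of k] by (intro mult_right_mono) auto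
      finally show "uu k * run_avg es v0 k \<le> \<bar>run_avg es v0 k\<bar>" by simp
    qed
  qed
  finally have ge: "Ex E v0 t phi \<le> expected_l1_dist V E t v0" .
  have Exphi: "Ex E v0 t phi = mu ^ t * phi v0" unfolding mu_def by (rule Ex_phi)
  have sq: "(\<Sum>k\<in>V. uu k * uu k) = 2 * (real n - lm - lm * (1 - lm))"
  proof -
    have "(\<Sum>k\<in>L. uu k * uu k) = real n - lm - lm * (1 - lm)"
      using sumL_uu_f[of uu] sL uu_n unfolding lm_def by simp
    moreover have "(\<Sum>k\<in>R. uu k * uu k) = real n - lm - lm * (1 - lm)"
      using sumR_uu_f[of uu] sR uu_2n unfolding lm_def by simp
    ultimately show ?thesis unfolding V_split by simp
  qed
  have phi0: "phi v0 \<ge> 1 - lm"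
  proof -
    have "phi v0 = (\<Sum>k\<in>V. uu k * uu k) / Z" unfolding phi_def v0_def by (simp add: sum_divide_distrib)
    also have "\<dots> = (2 * (real n - lm - lm * (1 - lm))) / (2 * (real n - lm))" unfolding sq Z_def ..
    also have "\<dots> = (real n - lm - lm * (1 - lm)) / (real n - lm)" by (rule mult_divide_mult_cancel_left) simp
    finally have e: "phi v0 = (real n - lm - lm * (1 - lm)) / (real n - lm)" .
    have pos: "real n - lm > 0" using n2 lmf by simp
    have "(1 - lm) * (real n - lm) \<le> real n - lm - lm * (1 - lm)"
    proof -
      have "lm * 1 \<le> lm * real n" using lmf n2 by (intro mult_left_mono) auto
      thus ?thesis by (simp add: algebra_simps)
    qed
    thus ?thesis unfolding e using pos by (simp add: le_divide_eq)
  qed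
  have lmsmall: "lm \<le> \<eta> / 3"
  proof -
    have "lm \<le> 2 / (real n + 1)" using lmf(3) n2 by (simp add: le_divide_eq)
    thus ?thesis using nbig unfolding \<eta>_def by simp
  qed
  have rate: "lm / (2 * real (card E)) \<le> 1 / real n ^ 3"
  proof -
    have "lm * real n ^ 3 \<le> lm * ((real n + 1) * (real n * real n - real n + 1))"
      using lmf by (intro mult_left_mono) (auto simp: algebra_simps power3_eq_cube)
    also have "\<dots> = (lm * (real n + 1)) * (real n * real n - real n + 1)" by simp
    also have "\<dots> \<le> 2 * (real n * real n - real n + 1)"
      using lmf(3) cardE Epos by (intro mult_right_mono) auto
    also have "\<dots> = 2 * real (card E)" using cardE by simp
    finally have "lm * real n ^ 3 \<le> 2 * real (card E)" .
    thus ?thesis using Epos n2 by (simp add: field_simps)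
  qed
  have mu_lb: "mu ^ t \<ge> 1 - \<eta> / 3"
  proof -
    have x1: "- 1 \<le> - (lm / (2 * real (card E)))"
    proof -
      have "lm / (2 * real (card E)) \<le> 1 / real n ^ 3" by (rule rate)
      also have "\<dots> \<le> 1" using n2 by simp
      finally show ?thesis by simp
    qed
    have "1 + real t * (- (lm / (2 * real (card E)))) \<le> (1 + - (lm / (2 * real (card E)))) ^ t"
      by (rule Bernoulli_inequality[OF x1])
    moreover have "real t * (lm / (2 * real (card E))) \<le> \<eta> / 3"
    proof -
      have "real t * (lm / (2 * real (card E))) \<le> real t * (1 / real n ^ 3)"
        using rate by (intro mult_left_mono) auto
      also have "\<dots> \<le> \<eta> / 3" using tsmall n2 unfolding \<eta>_def by (simp add: field_simps)
      finally show ?thesis .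
    qed
    ultimately show ?thesis unfolding mu_def by simp
  qed
  have "(1 - \<eta> / 3) * (1 - \<eta> / 3) \<le> mu ^ t * phi v0"
    using mu_lb phi0 lmsmall eta by (intro mult_mono) auto
  moreover have "\<epsilon> < (1 - \<eta> / 3) * (1 - \<eta> / 3)"
  proof -
    have "(1 - \<eta> / 3) * (1 - \<eta> / 3) = 1 - \<eta> + \<eta> / 3 + \<eta> * \<eta> / 9" by (simp add: algebra_simps)
    moreover have "0 < \<eta> * \<eta> / 9" using eta by simp
    moreover have "\<epsilon> = 1 - \<eta>" unfolding \<eta>_def by simp
    ultimately show ?thesis using eta(1) by linarith
  qed
  ultimately have "\<epsilon> < expected_l1_dist V E t v0" using ge Exphi by linarith
  thus ?thesis using l1 by blast
qed

lemma t0_fails: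
  fixes \<epsilon> :: real
  assumes "\<epsilon> < 1"
  shows "\<exists>v0. l1norm V v0 = 1 \<and> \<epsilon> < expected_l1_dist V E 0 v0"
proof -
  define v0 :: "nat \<Rightarrow> real" where "v0 = (\<lambda>k. if k = 1 then 1/2 else if k = 2*n then -1/2 else 0)"
  have ne: "(1::nat) \<noteq> 2*n" by simp
  have sub: "{1, 2*n} \<subseteq> V" using n1 by auto
  have s1: "(\<Sum>k\<in>V. \<bar>v0 k\<bar>) = (\<Sum>k\<in>{1, 2*n}. \<bar>v0 k\<bar>)"
    by (rule sum.mono_neutral_right) (use sub in \<open>auto simp: v0_def\<close>)
  have s2: "(\<Sum>k\<in>V. v0 k) = (\<Sum>k\<in>{1, 2*n}. v0 k)"
    by (rule sum.mono_neutral_right) (use sub in \<open>auto simp: v0_def\<close>)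
  have l1: "l1norm V v0 = 1" unfolding l1norm_def s1 using ne by (simp add: v0_def)
  have m0: "\<And>k. mean_vec V v0 k = 0" unfolding mean_vec_def s2 using ne by (simp add: v0_def)
  have "expected_l1_dist V E 0 v0 = l1norm V v0"
    unfolding expected_Ex Ex_0 m0 by simp
  thus ?thesis using l1 assms by auto
qed

end


theorem theorem6:
  fixes \<epsilon> :: real
  assumes "0 < \<epsilon>" and "\<epsilon> < 1"
  shows "\<exists>c C. 0 < c \<and> c \<le> C \<and>
           (\<forall>n::nat. n \<ge> 1 \<longrightarrow>
              c * real n ^ 3 \<le> real (t_eps_1 \<epsilon> (dumbbell_V n) (dumbbell_E n)) \<and>
              real (t_eps_1 \<epsilon> (dumbbell_V n) (dumbbell_E n)) \<le> C * real n ^ 3)"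
proof -
  note eps0 = assms(1) and eps1 = assms(2)
  define \<eta> where "\<eta> = 1 - \<epsilon>"
  have eta: "0 < \<eta>" "\<eta> < 1" unfolding \<eta>_def using assms by auto
  define K :: nat where "K = nat \<lceil>108 / \<epsilon>^2\<rceil> + 1"
  define N0 :: nat where "N0 = nat \<lceil>6 / \<eta>\<rceil> + 1"
  define c where "c = min (\<eta> / 3) (1 / real N0 ^ 3)"
  define C where "C = 18 * real K"
  have K1: "1 \<le> K" unfolding K_def by simp
  have K2: "108 \<le> real K * \<epsilon>^2"
  proof -
    have "108 / \<epsilon>^2 \<le> real (nat \<lceil>108 / \<epsilon>^2\<rceil>)" by (rule real_nat_ceiling_ge)
    also have "\<dots> \<le> real K" unfolding K_def by simp
    finally have "108 / \<epsilon>^2 \<le> real K" .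
    thus ?thesis using eps0 by (simp add: divide_le_eq)
  qed
  have N0pos: "real N0 \<ge> 1" unfolding N0_def by simp
  have N0big: "6 / \<eta> < real N0"
  proof -
    have "6 / \<eta> \<le> real (nat \<lceil>6 / \<eta>\<rceil>)" by (rule real_nat_ceiling_ge)
    thus ?thesis unfolding N0_def by simp
  qed
  have c0: "0 < c" unfolding c_def using eta N0pos by simp
  have cC: "c \<le> C"
  proof -
    have "c \<le> \<eta> / 3" unfolding c_def by simp
    also have "\<dots> \<le> 1" using eta by simp
    also have "1 \<le> C" unfolding C_def using K1 by simp
    finally show ?thesis .
  qed
  have main: "c * real n ^ 3 \<le> real (t_eps_1 \<epsilon> (dumbbell_V n) (dumbbell_E n)) \<and>
              real (t_eps_1 \<epsilon> (dumbbell_V n) (dumbbell_E n)) \<le> C * real n ^ 3" if n1: "n \<ge> 1" for n :: nat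
  proof -
    interpret db n by unfold_locales (rule n1)
    define P where "P = (\<lambda>t. \<forall>v0. l1norm {1..2*n} v0 = 1 \<longrightarrow> expected_l1_dist {1..2*n} (dumbbell_E n) t v0 \<le> \<epsilon>)"
    have teq: "t_eps_1 \<epsilon> (dumbbell_V n) (dumbbell_E n) = Least P"
      unfolding t_eps_1_def dumbbell_V_def P_def ..
    have PT: "P (18 * K * n^3)" unfolding P_def using upper[OF eps0 K1 K2] by blast
    have hle: "Least P \<le> 18 * K * n^3" using PT by (rule Least_le)
    have hP: "P (Least P)" using PT by (rule LeastI)
    have UB: "real (t_eps_1 \<epsilon> (dumbbell_V n) (dumbbell_E n)) \<le> C * real n ^ 3"
    proof -
      have "real (Least P) \<le> real (18 * K * n^3)" using hle by linarith
      thus ?thesis unfolding teq C_def by simp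
    qed
    have LB: "c * real n ^ 3 \<le> real (t_eps_1 \<epsilon> (dumbbell_V n) (dumbbell_E n))"
    proof (cases "N0 \<le> n")
      case True
      have nbig: "2 / (real n + 1) \<le> (1 - \<epsilon>) / 3"
      proof -
        have "6 / \<eta> < real n + 1" using N0big True by linarith
        hence "6 < \<eta> * (real n + 1)" using eta by (simp add: divide_less_eq mult.commute)
        hence "2 / (real n + 1) < \<eta> / 3" by (simp add: field_simps)
        thus ?thesis unfolding \<eta>_def by simp
      qed
      have "\<not> real (Least P) \<le> (1 - \<epsilon>) / 3 * real n ^ 3"
      proof
        assume "real (Least P) \<le> (1 - \<epsilon>) / 3 * real n ^ 3"
        from lower[OF eps0 eps1 nbig this] obtain v0 where
          "l1norm {1..2*n} v0 = 1" "\<epsilon> < expected_l1_dist {1..2*n} (dumbbell_E n) (Least P) v0" by blast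
        thus False using hP unfolding P_def by fastforce
      qed
      hence "(1 - \<epsilon>) / 3 * real n ^ 3 \<le> real (Least P)" by simp
      moreover have "c * real n ^ 3 \<le> (1 - \<epsilon>) / 3 * real n ^ 3"
      proof -
        have cle: "c \<le> (1 - \<epsilon>) / 3" unfolding c_def \<eta>_def by (rule min.cobounded1)
        thus ?thesis by (intro mult_right_mono) auto
      qed
      ultimately show ?thesis unfolding teq by linarith
    next
      case False
      have "Least P \<noteq> 0"
      proof
        assume "Least P = 0"
        from t0_fails[OF eps1] obtain v0 where
          "l1norm {1..2*n} v0 = 1" "\<epsilon> < expected_l1_dist {1..2*n} (dumbbell_E n) 0 v0" by blast
        thus False using hP \<open>Least P = 0\<close> unfolding P_def by fastforce
      qed
      hence ge1: "1 \<le> real (Least P)" by simp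
      have "real n ^ 3 \<le> real N0 ^ 3" using False by (intro power_mono) auto
      hence "c * real n ^ 3 \<le> (1 / real N0 ^ 3) * real N0 ^ 3"
        unfolding c_def by (intro mult_mono) auto
      also have "\<dots> = 1" using N0pos by simp
      finally show ?thesis unfolding teq using ge1 by linarith
    qed
    show ?thesis using LB UB by simp
  qed
  show ?thesis using c0 cC main by blast
qed


end
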